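(* Consider a two-player perfect-information game of depth $D$, with notation as in the context. Let $\{\tilde U_s\}_{s\in\mathcal S}$ be learned EPFs and $\tilde\pi$ the strategy they induce. Suppose $L_\infty(\tilde U_s,\tilde U^{\mathrm{target}}_s)\le\epsilon$ for all $s\in\mathcal S$. Let $\pi^*$ be an optimal SEFCE. Then $|R_1(\tilde\pi)-R_1(\pi^* )|=\mathcal O(D\epsilon)$, i.e. it is at most $C D\epsilon$ for an absolute constant $C$ that does not depend on the game, on $\epsilon$ or on the learned EPFs.
   Context: A two-player perfect-information game is a finite rooted tree whose vertices are the states $s\in\mathcal S$. The leaves $\mathcal L$ carry payoffs $r_1(\ell),r_2(\ell)\in\mathbb R$ for the leader $\mathsf P_1$ and the follower $\mathsf P_2$. Each non-leaf state belongs to exactly one of $\mathcal S_1$ (leader) or $\mathcal S_2$ (follower). $\mathcal C(s)$ is the set of children of $s$, and $T(a;s)$ is the child reached by action $a$. The depth $D$ is the maximum number of edges on a root-to-leaf path. Define $\underline V,\overline V$ by backward induction: - for a leaf: $\underline V(\ell)=\overline V(\ell)=r_2(\ell)$; - $\underline V(s)=\min_{s'\in\mathcal C(s)}\underline V(s')$ for $s\in\mathcal S_1$; - $\underline V(s)=\max_{s'\in\mathcal C(s)}\underline V(s')$ for $s\in\mathcal S_2$; - $\overline V(s)=\max_{s'\in\mathcal C(s)}\overline V(s')$ for every non-leaf $s$. For $s\in\mathcal S_2$ and $s'\in\mathcal C(s)$, let $\tau(s')=\max_{s^!\in\mathcal C(s),s^!\ne s'}\underline V(s^!)$. Let $\beta(s')=\tau(s')$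 if the parent of $s'$ is in $\mathcal S_2$, and $\beta(s')=-\infty$ if it is in $\mathcal S_1$. For $g:\mathbb R\to\mathbb R\cup\{-\infty\}$: - $\bigwedge_i g_i$ is the upper concave envelope, i.e. the pointwise infimum of all concave $h\ge\max_i g_i$; - $[g\triangleright t](\mu)=g(\mu)$ if $\mu\ge t$ and $-\infty$ otherwise. Exact EPFs: $U_\ell(\mu)=r_1(\ell)$ if $\mu=r_2(\ell)$ and $-\infty$ otherwise; $U_s=\bigwedge_{s'\in\mathcal C(s)}(U_{s'}\triangleright\beta(s'))$ for non-leaf $s$. Learned EPFs: $\tilde U_\ell=U_\ell$ for leaves. For each non-leaf $s$, $\tilde U_s$ is a piecewise linear function, the linear interpolation of finitely many points with $x$-coordinates in $[\underline V(s),\overline V(s)]$ including both endpoints. It is real-valued on that interval and $-\infty$ outside. The target is $\tilde U^{\mathrm{target}}_s=\bigwedge_{s'\in\mathcal C(s)}(\tilde U_{s'}\triangleright\beta(s'))$ for non-leaf $s$, and $\tilde U^{\mathrm{target}}_\ell=\tilde U_\ell$ for leaves. The loss is $L_\infty(f,g)=\sup_{\mu\in\mathbb R}|f(\mu)-g(\mu)|$, with the convention $|(-\infty)-(-\infty)|=0$. Induced strategy $\tilde\pi$: start at the root with promise $\mu_{\mathrm{root}}\in\arg\max\tilde U_{\mathrm{root}}$. At a non-leaf $s$ with promise $\mu$, pick a maximizer $(s',s'',t,\mu',\mu'')$, over $s',s''\in\mathcal C(s)$, $t\in[0,1]$ with $t\mu'+(1-t)\mu''=\mu$, of $t[\tilde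 U_{s'}\triangleright\beta(s')](\mu')+(1-t)[\tilde U_{s''}\triangleright\beta(s'')](\mu'')$. Move to $s'$ with probability $t$ and promise $\mu'$, and to $s''$ with probability $1-t$ and promise $\mu''$. At follower states this is a recommendation that the follower follows. $R_1(\tilde\pi)$ is the leader's expected leaf payoff under this play. SEFCE: a (possibly recommendation-/history-dependent) joint strategy $\pi$ of leader and follower is a Stackelberg extensive-form correlated equilibrium if, for every follower state $s$ and action $a$ recommended with positive probability, the follower's expected payoff from $T(a;s)$ onward under $\pi$ is at least $\tau(T(a;s))$. The payoff threshold reflects that deviations are punished by the leader's grim strategy. An SEFCE is optimal if it maximizes the leader's expected payoff $R_1(\pi)$. *)

theory Defs
  imports "HOL-Analysis.Analysis"
begin

datatype player = Leader | Follower

text \<open>A leaf carries (r1, r2) = (leader payoff, follower payoff);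
  an inner node carries its owner and the (ordered) list of its children.
  States are identified with positions (paths of child indices from the root), so that
  equal subtrees at different places are different states.\<close>
datatype gtree = Leaf real real | Node player "gtree list"

fun wf_tree :: "gtree \<Rightarrow> bool" where
  "wf_tree (Leaf a b) = True"
| "wf_tree (Node P ts) = (ts \<noteq> [] \<and> (\<forall>u\<in>set ts. wf_tree u))"

fun is_leaf :: "gtree \<Rightarrow> bool" where
  "is_leaf (Leaf a b) = True"
| "is_leaf (Node P ts) = False"

fun kids :: "gtree \<Rightarrow> gtree list" where
  "kids (Leaf a b) = []"
| "kids (Node P ts) = ts"

fun owner :: "gtree \<Rightarrow> player" where
  "owner (Leaf a b) = Leader"   \<comment> \<open>irrelevant for leaves\<close>
| "owner (Node P ts) = P"

fun rew1 :: "gtree \<Rightarrow> real" where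
  "rew1 (Leaf a b) = a"
| "rew1 (Node P ts) = 0"

fun rew2 :: "gtree \<Rightarrow> real" where
  "rew2 (Leaf a b) = b"
| "rew2 (Node P ts) = 0"

primrec subtree :: "gtree \<Rightarrow> nat list \<Rightarrow> gtree" where
  "subtree t [] = t"
| "subtree t (i # p) = subtree (kids t ! i) p"

primrec valid_pos :: "gtree \<Rightarrow> nat list \<Rightarrow> bool" where
  "valid_pos t [] = True"
| "valid_pos t (i # p) = (i < length (kids t) \<and> valid_pos (kids t ! i) p)"

definition leaf_positions :: "gtree \<Rightarrow> nat list set" where
  "leaf_positions t = {p. valid_pos t p \<and> is_leaf (subtree t p)}"

fun depth :: "gtree \<Rightarrow> nat" where
  "depth (Leaf a b) = 0"
| "depth (Node P ts) = Suc (Max (set (map depth ts)))"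

fun vlow :: "gtree \<Rightarrow> real" where
  "vlow (Leaf a b) = b"
| "vlow (Node P ts) =
     (if P = Leader then Min (set (map vlow ts)) else Max (set (map vlow ts)))"

fun vhigh :: "gtree \<Rightarrow> real" where
  "vhigh (Leaf a b) = b"
| "vhigh (Node P ts) = Max (set (map vhigh ts))"

text \<open>\<open>\<tau>\<close> of the child \<open>i\<close> of the node at position \<open>p\<close>: maximum of \<open>\<underline>V\<close> over the
  other children (the maximum of an empty set is \<open>-\<infinity>\<close>).\<close>
definition tau :: "gtree \<Rightarrow> nat list \<Rightarrow> nat \<Rightarrow> ereal" where
  "tau t p i = (let ts = kids (subtree t p) in
     Sup ((\<lambda>j. ereal (vlow (ts ! j))) ` {j. j < length ts \<and> j \<noteq> i}))"

definition beta :: "gtree \<Rightarrow> nat list \<Rightarrow> nat \<Rightarrow> ereal" where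
  "beta t p i = (if owner (subtree t p) = Follower then tau t p i else - \<infinity>)"

definition concave_ext :: "(real \<Rightarrow> ereal) \<Rightarrow> bool" where
  "concave_ext h \<longleftrightarrow> (\<forall>x y (a::real) (b::real) (w::real).
      0 \<le> w \<longrightarrow> w \<le> 1 \<longrightarrow> ereal a \<le> h x \<longrightarrow> ereal b \<le> h y \<longrightarrow>
      ereal (w * a + (1 - w) * b) \<le> h (w * x + (1 - w) * y))"

definition cenv :: "(real \<Rightarrow> ereal) \<Rightarrow> real \<Rightarrow> ereal" where
  "cenv g \<mu> = Inf {h \<mu> | h. concave_ext h \<and> (\<forall>x. h x \<noteq> \<infinity>) \<and> (\<forall>x. g x \<le> h x)}"

definition restr :: "(real \<Rightarrow> ereal) \<Rightarrow> ereal \<Rightarrow> real \<Rightarrow> ereal" where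
  "restr g t \<mu> = (if t \<le> ereal \<mu> then g \<mu> else - \<infinity>)"

definition Uleaf :: "real \<Rightarrow> real \<Rightarrow> real \<Rightarrow> ereal" where
  "Uleaf r1 r2 \<mu> = (if \<mu> = r2 then ereal r1 else - \<infinity>)"

text \<open>\<open>|f(\<mu>) - g(\<mu>)|\<close> with the convention \<open>|(-\<infinity>) - (-\<infinity>)| = 0\<close>.\<close>
definition edist :: "ereal \<Rightarrow> ereal \<Rightarrow> ereal" where
  "edist a b = (if a = b then 0 else \<bar>a - b\<bar>)"

definition Linf :: "(real \<Rightarrow> ereal) \<Rightarrow> (real \<Rightarrow> ereal) \<Rightarrow> ereal" where
  "Linf f g = (SUP \<mu>. edist (f \<mu>) (g \<mu>))"

definition pwl_on :: "real \<Rightarrow> real \<Rightarrow> (real \<Rightarrow> ereal) \<Rightarrow> bool" where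
  "pwl_on a b f \<longleftrightarrow> (\<exists>xs ys :: real list.
      xs \<noteq> [] \<and> length ys = length xs \<and> sorted_wrt (<) xs \<and>
      hd xs = a \<and> last xs = b \<and>
      f (hd xs) = ereal (hd ys) \<and>
      (\<forall>k. Suc k < length xs \<longrightarrow> (\<forall>x. xs ! k \<le> x \<and> x \<le> xs ! Suc k \<longrightarrow>
          f x = ereal (ys ! k + (x - xs ! k) / (xs ! Suc k - xs ! k) * (ys ! Suc k - ys ! k)))) \<and>
      (\<forall>x. x < a \<or> b < x \<longrightarrow> f x = - \<infinity>))"

definition learned_epfs :: "gtree \<Rightarrow> (nat list \<Rightarrow> real \<Rightarrow> ereal) \<Rightarrow> bool" where
  "learned_epfs t U \<longleftrightarrow> (\<forall>p. valid_pos t p \<longrightarrow>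
     (if is_leaf (subtree t p)
      then U p = Uleaf (rew1 (subtree t p)) (rew2 (subtree t p))
      else pwl_on (vlow (subtree t p)) (vhigh (subtree t p)) (U p)))"

definition child_fn :: "gtree \<Rightarrow> (nat list \<Rightarrow> real \<Rightarrow> ereal) \<Rightarrow> nat list \<Rightarrow> nat \<Rightarrow> real \<Rightarrow> ereal" where
  "child_fn t U p i = restr (U (p @ [i])) (beta t p i)"

definition target :: "gtree \<Rightarrow> (nat list \<Rightarrow> real \<Rightarrow> ereal) \<Rightarrow> nat list \<Rightarrow> real \<Rightarrow> ereal" where
  "target t U p = (if is_leaf (subtree t p) then U p
     else cenv (\<lambda>\<mu>. SUP i\<in>{..<length (kids (subtree t p))}. child_fn t U p i \<mu>))"

text \<open>A choice \<open>(i, j, \<lambda>, \<mu>', \<mu>'')\<close> at position \<open>p\<close> with promise \<open>\<mu>\<close>: move to child \<open>i\<close> with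
  probability \<open>\<lambda>\<close> and promise \<open>\<mu>'\<close>, and to child \<open>j\<close> with probability \<open>1-\<lambda>\<close> and promise \<open>\<mu>''\<close>.\<close>
type_synonym choice = "nat \<times> nat \<times> real \<times> real \<times> real"

definition feasible_choice :: "gtree \<Rightarrow> nat list \<Rightarrow> real \<Rightarrow> choice \<Rightarrow> bool" where
  "feasible_choice t p \<mu> c = (case c of (i, j, w, \<mu>1, \<mu>2) \<Rightarrow>
     i < length (kids (subtree t p)) \<and> j < length (kids (subtree t p)) \<and>
     0 \<le> w \<and> w \<le> 1 \<and> w * \<mu>1 + (1 - w) * \<mu>2 = \<mu>)"

definition choice_obj :: "gtree \<Rightarrow> (nat list \<Rightarrow> real \<Rightarrow> ereal) \<Rightarrow> nat list \<Rightarrow> choice \<Rightarrow> ereal" where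
  "choice_obj t U p c = (case c of (i, j, w, \<mu>1, \<mu>2) \<Rightarrow>
     ereal w * child_fn t U p i \<mu>1 + ereal (1 - w) * child_fn t U p j \<mu>2)"

definition is_maximizer :: "gtree \<Rightarrow> (nat list \<Rightarrow> real \<Rightarrow> ereal) \<Rightarrow> nat list \<Rightarrow> real \<Rightarrow> choice \<Rightarrow> bool" where
  "is_maximizer t U p \<mu> c \<longleftrightarrow> feasible_choice t p \<mu> c \<and>
     (\<forall>c'. feasible_choice t p \<mu> c' \<longrightarrow> choice_obj t U p c' \<le> choice_obj t U p c)"

definition induced_selection :: "gtree \<Rightarrow> (nat list \<Rightarrow> real \<Rightarrow> ereal) \<Rightarrow> (nat list \<Rightarrow> real \<Rightarrow> choice) \<Rightarrow> bool" where
  "induced_selection t U sel \<longleftrightarrow> (\<forall>p \<mu>. valid_pos t p \<longrightarrow> \<not> is_leaf (subtree t p) \<longrightarrow>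
      is_maximizer t U p \<mu> (sel p \<mu>))"

text \<open>Leader's expected leaf payoff when play is at position \<open>p\<close> with promise \<open>\<mu>\<close>
  (the fuel \<open>n\<close> only ensures termination; \<open>depth t\<close> is always enough).\<close>
primrec play_value :: "gtree \<Rightarrow> (nat list \<Rightarrow> real \<Rightarrow> choice) \<Rightarrow> nat \<Rightarrow> nat list \<Rightarrow> real \<Rightarrow> real" where
  "play_value t sel 0 p \<mu> = rew1 (subtree t p)"
| "play_value t sel (Suc n) p \<mu> =
     (if is_leaf (subtree t p) then rew1 (subtree t p)
      else (case sel p \<mu> of (i, j, w, \<mu>1, \<mu>2) \<Rightarrow>
        w * play_value t sel n (p @ [i]) \<mu>1 + (1 - w) * play_value t sel n (p @ [j]) \<mu>2))"

definition induced_payoff :: "gtree \<Rightarrow> (nat list \<Rightarrow> real \<Rightarrow> choice) \<Rightarrow> real \<Rightarrow> real" where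
  "induced_payoff t sel \<mu>root = play_value t sel (depth t) [] \<mu>root"

text \<open>A (correlated, possibly history-dependent) joint strategy is represented by the
  probability distribution it induces on the leaves (positions).\<close>
definition leaf_dist :: "gtree \<Rightarrow> (nat list \<Rightarrow> real) \<Rightarrow> bool" where
  "leaf_dist t q \<longleftrightarrow> (\<forall>p. 0 \<le> q p) \<and> (\<forall>p. p \<notin> leaf_positions t \<longrightarrow> q p = 0) \<and>
     (\<Sum>p\<in>leaf_positions t. q p) = 1"

definition reach_prob :: "gtree \<Rightarrow> (nat list \<Rightarrow> real) \<Rightarrow> nat list \<Rightarrow> real" where
  "reach_prob t q c = (\<Sum>l\<in>{l\<in>leaf_positions t. (\<exists>r. l = c @ r)}. q l)"

definition R1 :: "gtree \<Rightarrow> (nat list \<Rightarrow> real) \<Rightarrow> real" where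
  "R1 t q = (\<Sum>l\<in>leaf_positions t. q l * rew1 (subtree t l))"

definition R2_from :: "gtree \<Rightarrow> (nat list \<Rightarrow> real) \<Rightarrow> nat list \<Rightarrow> real" where
  "R2_from t q c = (\<Sum>l\<in>{l\<in>leaf_positions t. (\<exists>r. l = c @ r)}. q l * rew2 (subtree t l)) / reach_prob t q c"

definition is_SEFCE :: "gtree \<Rightarrow> (nat list \<Rightarrow> real) \<Rightarrow> bool" where
  "is_SEFCE t q \<longleftrightarrow> leaf_dist t q \<and>
     (\<forall>p i. valid_pos t p \<longrightarrow> \<not> is_leaf (subtree t p) \<longrightarrow> owner (subtree t p) = Follower \<longrightarrow>
        i < length (kids (subtree t p)) \<longrightarrow> reach_prob t q (p @ [i]) > 0 \<longrightarrow>
        tau t p i \<le> ereal (R2_from t q (p @ [i])))"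

definition optimal_SEFCE :: "gtree \<Rightarrow> (nat list \<Rightarrow> real) \<Rightarrow> bool" where
  "optimal_SEFCE t q \<longleftrightarrow> is_SEFCE t q \<and> (\<forall>q'. is_SEFCE t q' \<longrightarrow> R1 t q' \<le> R1 t q)"

end

theory Submission
  imports Defs
begin

lemma subtree_append: "subtree t (p @ r) = subtree (subtree t p) r"
  by (induction p arbitrary: t) auto

lemma valid_append: "valid_pos t (p @ r) = (valid_pos t p \<and> valid_pos (subtree t p) r)"
  by (induction p arbitrary: t) auto

lemma valid_child: "valid_pos t (p @ [i]) = (valid_pos t p \<and> i < length (kids (subtree t p)))"
  by (simp add: valid_append)

lemma subtree_child: "subtree t (p @ [i]) = kids (subtree t p) ! i"
  by (simp add: subtree_append)

lemma finite_valid: "finite {p. valid_pos t p}"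
proof (induction t)
  case (Leaf a b)
  have "{p. valid_pos (Leaf a b) p} = {[]}"
    by (auto, case_tac x, auto)
  then show ?case by simp
next
  case (Node P ts)
  have "{p. valid_pos (Node P ts) p} \<subseteq> {[]} \<union> (\<Union>i<length ts. (Cons i) ` {p. valid_pos (ts ! i) p})"
    by (auto, case_tac x, auto)
  moreover have "finite ({[]} \<union> (\<Union>i<length ts. (Cons i) ` {p. valid_pos (ts ! i) p}))"
    using Node by auto
  ultimately show ?case by (rule finite_subset)
qed

lemma finite_LP: "finite (leaf_positions t)"
  unfolding leaf_positions_def using finite_valid by (rule rev_finite_subset) auto

lemma depth_child: "u \<in> set ts \<Longrightarrow> depth u < depth (Node P ts)"
  by (simp add: le_imp_less_Suc)

lemma nonleaf_cases: "\<not> is_leaf s \<Longrightarrow> s = Node (owner s) (kids s)"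
  by (cases s) auto

lemma depth_child_le:
  assumes "depth (subtree t p) \<le> Suc n" "\<not> is_leaf (subtree t p)" "i < length (kids (subtree t p))"
  shows "depth (subtree t (p @ [i])) \<le> n"
proof -
  have "subtree t (p @ [i]) \<in> set (kids (subtree t p))" using assms(3) by (simp add: subtree_child)
  then have "depth (subtree t (p @ [i])) < depth (subtree t p)"
    using depth_child nonleaf_cases[OF assms(2)] by metis
  then show ?thesis using assms(1) by simp
qed

lemma depth0_leaf: "depth s \<le> 0 \<Longrightarrow> is_leaf s"
  by (cases s) auto

lemma edist_nonneg: "0 \<le> edist a b"
  by (simp add: edist_def)

lemma edist_le_Linf: "edist (f x) (g x) \<le> Linf f g"
  unfolding Linf_def by (rule SUP_upper) simp

lemma Linf_nonneg: "0 \<le> Linf f g"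
  using edist_nonneg edist_le_Linf order_trans by blast

lemma edist_sym: "edist a b = edist b a"
  unfolding edist_def by (cases a; cases b) auto

lemma Linf_sym: "Linf f g = Linf g f"
  unfolding Linf_def using edist_sym by metis

lemma edist_lower:
  assumes "edist a b \<le> ereal e" "ereal c \<le> b"
  shows "ereal (c - e) \<le> a"
proof -
  have e: "0 \<le> e" using assms(1) edist_nonneg[of a b] by (meson ereal_less_eq(5) order_trans)
  show ?thesis
  proof (cases "a = b")
    case True then show ?thesis using assms e by (cases b) auto
  next
    case False
    then show ?thesis using assms unfolding edist_def
      by (cases a; cases b) (auto split: if_splits)
  qed
qed

lemma Linf_lower:
  assumes "Linf f g \<le> ereal e" "ereal c \<le> g x"
  shows "ereal (c - e) \<le> f x"
  using edist_lower[OF order_trans[OF edist_le_Linf assms(1)] assms(2)] .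

lemma Linf_lower2:
  assumes "Linf f g \<le> ereal e" "ereal c \<le> f x"
  shows "ereal (c - e) \<le> g x"
  using Linf_lower[of g f e c x] assms Linf_sym by metis

lemma cover:
  "sorted_wrt (<) xs \<Longrightarrow> xs \<noteq> [] \<Longrightarrow> hd xs \<le> (x::real) \<Longrightarrow> x \<le> last xs \<Longrightarrow>
   x = hd xs \<or> (\<exists>k. Suc k < length xs \<and> xs ! k \<le> x \<and> x \<le> xs ! Suc k)"
proof (induction xs)
  case Nil then show ?case by simp
next
  case (Cons y zs)
  show ?case
  proof (cases zs)
    case Nil then show ?thesis using Cons by (auto intro: antisym)
  next
    case (Cons z ws)
    show ?thesis
    proof (cases "x \<le> z")
      case True then show ?thesis using Cons \<open>hd (y # zs) \<le> x\<close> by (auto intro!: exI[of _ 0])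
    next
      case False
      have "x = hd zs \<or> (\<exists>k. Suc k < length zs \<and> zs ! k \<le> x \<and> x \<le> zs ! Suc k)"
        using Cons.IH Cons.prems False \<open>zs = z # ws\<close> by auto
      then show ?thesis
      proof
        assume "x = hd zs" then show ?thesis using Cons \<open>hd (y # zs) \<le> x\<close> by (auto intro!: exI[of _ 0])
      next
        assume "\<exists>k. Suc k < length zs \<and> zs ! k \<le> x \<and> x \<le> zs ! Suc k"
        then obtain k where "Suc k < length zs" "zs ! k \<le> x" "x \<le> zs ! Suc k" by blast
        then show ?thesis by (auto intro!: exI[of _ "Suc k"])
      qed
    qed
  qed
qed

lemma U_notinf:
  assumes "learned_epfs t U" "valid_pos t p"
  shows "U p x \<noteq> \<infinity>"
proof (cases "is_leaf (subtree t p)")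
  case True
  then show ?thesis using assms unfolding learned_epfs_def Uleaf_def by auto
next
  case False
  then have "pwl_on (vlow (subtree t p)) (vhigh (subtree t p)) (U p)"
    using assms unfolding learned_epfs_def by auto
  then obtain xs ys a b where H: "xs \<noteq> []" "length ys = length xs" "sorted_wrt (<) xs"
      "hd xs = a" "last xs = b" "U p (hd xs) = ereal (hd ys)"
      "\<forall>k. Suc k < length xs \<longrightarrow> (\<forall>x. xs ! k \<le> x \<and> x \<le> xs ! Suc k \<longrightarrow>
          U p x = ereal (ys ! k + (x - xs ! k) / (xs ! Suc k - xs ! k) * (ys ! Suc k - ys ! k)))"
      "\<forall>x. x < a \<or> b < x \<longrightarrow> U p x = - \<infinity>"
    unfolding pwl_on_def by blast
  show ?thesis
  proof (cases "x < a \<or> b < x")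
    case True then show ?thesis using H by auto
  next
    case False
    then have "x = hd xs \<or> (\<exists>k. Suc k < length xs \<and> xs ! k \<le> x \<and> x \<le> xs ! Suc k)"
      using cover[OF H(3) H(1)] H(4,5) by auto
    then show ?thesis using H(6,7) by auto
  qed
qed

lemma U_somewhere:
  assumes "learned_epfs t U" "valid_pos t p"
  shows "\<exists>\<mu> c. U p \<mu> = ereal c"
proof (cases "is_leaf (subtree t p)")
  case True
  then show ?thesis using assms unfolding learned_epfs_def Uleaf_def by auto
next
  case False
  then have "pwl_on (vlow (subtree t p)) (vhigh (subtree t p)) (U p)"
    using assms unfolding learned_epfs_def by auto
  then show ?thesis unfolding pwl_on_def by blast
qed

lemma leaf_U:
  assumes "learned_epfs t U" "valid_pos t p" "is_leaf (subtree t p)"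
  shows "U p = Uleaf (rew1 (subtree t p)) (rew2 (subtree t p))"
  using assms unfolding learned_epfs_def by auto

lemma child_fn_eq: "child_fn t U p i x = (if beta t p i \<le> ereal x then U (p @ [i]) x else - \<infinity>)"
  unfolding child_fn_def restr_def by simp

lemma child_fn_notinf:
  assumes "learned_epfs t U" "valid_pos t p" "i < length (kids (subtree t p))"
  shows "child_fn t U p i x \<noteq> \<infinity>"
  using U_notinf[OF assms(1), of "p @ [i]"] assms by (simp add: child_fn_eq valid_child)

lemma jensen:
  assumes "concave_ext h" "finite I"
  shows "(\<forall>i\<in>I. 0 \<le> \<alpha> i) \<longrightarrow> sum \<alpha> I = 1 \<longrightarrow> (\<forall>i\<in>I. ereal (y i) \<le> h (x i)) \<longrightarrow>
     ereal (\<Sum>i\<in>I. \<alpha> i * y i) \<le> h (\<Sum>i\<in>I. \<alpha> i * x i)"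
  using assms(2)
proof (induction I arbitrary: \<alpha> rule: finite_induct)
  case empty then show ?case by simp
next
  case (insert k I)
  show ?case
  proof (intro impI)
    assume a0: "\<forall>i\<in>insert k I. 0 \<le> \<alpha> i" and a1: "sum \<alpha> (insert k I) = 1"
      and a2: "\<forall>i\<in>insert k I. ereal (y i) \<le> h (x i)"
    have s: "\<alpha> k + sum \<alpha> I = 1" using a1 insert by simp
    have sI: "0 \<le> sum \<alpha> I" using a0 by (simp add: sum_nonneg)
    show "ereal (\<Sum>i\<in>insert k I. \<alpha> i * y i) \<le> h (\<Sum>i\<in>insert k I. \<alpha> i * x i)"
    proof (cases "sum \<alpha> I = 0")
      case True
      then have z: "\<forall>i\<in>I. \<alpha> i = 0" using a0 insert sum_nonneg_eq_0_iff by auto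
      then have "(\<Sum>i\<in>I. \<alpha> i * y i) = 0" "(\<Sum>i\<in>I. \<alpha> i * x i) = 0" by auto
      moreover have "\<alpha> k = 1" using s True by simp
      ultimately show ?thesis using insert a2 by simp
    next
      case False
      define \<beta> where "\<beta> i = \<alpha> i / sum \<alpha> I" for i
      have b0: "\<forall>i\<in>I. 0 \<le> \<beta> i" using a0 sI by (simp add: \<beta>_def)
      have b1: "sum \<beta> I = 1" using False by (simp add: \<beta>_def sum_divide_distrib[symmetric])
      have IH: "ereal (\<Sum>i\<in>I. \<beta> i * y i) \<le> h (\<Sum>i\<in>I. \<beta> i * x i)"
        using insert.IH b0 b1 a2 by auto
      have ey: "(\<Sum>i\<in>I. \<alpha> i * y i) = sum \<alpha> I * (\<Sum>i\<in>I. \<beta> i * y i)"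
        using False by (simp add: \<beta>_def sum_distrib_left)
      have ex: "(\<Sum>i\<in>I. \<alpha> i * x i) = sum \<alpha> I * (\<Sum>i\<in>I. \<beta> i * x i)"
        using False by (simp add: \<beta>_def sum_distrib_left)
      have "ereal (\<alpha> k * y k + (1 - \<alpha> k) * (\<Sum>i\<in>I. \<beta> i * y i))
            \<le> h (\<alpha> k * x k + (1 - \<alpha> k) * (\<Sum>i\<in>I. \<beta> i * x i))"
        using assms(1) unfolding concave_ext_def
        using a0 s sI a2 IH by (metis insertI1 le_add_same_cancel1)
      moreover have "1 - \<alpha> k = sum \<alpha> I" using s by simp
      ultimately show ?thesis using insert ey ex by simp
    qed
  qed
qed

definition twop :: "(real \<times> real) set \<Rightarrow> real \<Rightarrow> real \<Rightarrow> bool" where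
  "twop S \<mu> V \<longleftrightarrow> (\<exists>p1\<in>S. \<exists>p2\<in>S. \<exists>t. 0 \<le> t \<and> t \<le> 1 \<and> t * fst p1 + (1-t) * fst p2 = \<mu> \<and>
      V \<le> t * snd p1 + (1-t) * snd p2)"

lemma twop_pair:
  assumes "p1 \<in> S" "p2 \<in> S" "0 \<le> t" "t \<le> 1" "t * fst p1 + (1-t) * fst p2 = \<mu>"
    "V \<le> t * snd p1 + (1-t) * snd p2"
  shows "twop S \<mu> V"
  using assms unfolding twop_def by blast

lemma twop_single: "p \<in> S \<Longrightarrow> V \<le> snd p \<Longrightarrow> twop S (fst p) V"
  by (rule twop_pair[of p S p 1]) auto

lemma twop_mono: "twop S \<mu> V \<Longrightarrow> S \<subseteq> S' \<Longrightarrow> V' \<le> V \<Longrightarrow> twop S' \<mu> V'"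
  unfolding twop_def by (meson order_trans subsetD)

lemma gw_aux:
  fixes a x v3 xk vk t \<mu> x3 :: real
  assumes "x3 - \<mu> > 0" "t * (x3 - xk) = x3 - \<mu>"
  shows "a * (x3 - xk) / (x3 - \<mu>) * (t * vk + (1 - t) * v3) = a * vk + a * (\<mu> - xk) / (x3 - \<mu>) * v3"
proof -
  have e1: "(1 - t) * (x3 - xk) = \<mu> - xk" using assms(2) by (simp add: algebra_simps)
  have inner: "(x3 - xk) * (t * vk + (1 - t) * v3) = (x3 - \<mu>) * vk + (\<mu> - xk) * v3"
  proof -
    have "(x3 - xk) * (t * vk + (1 - t) * v3) = (t * (x3 - xk)) * vk + ((1 - t) * (x3 - xk)) * v3"
      by (simp add: algebra_simps)
    then show ?thesis using assms(2) e1 by simp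
  qed
  have "a * (x3 - xk) / (x3 - \<mu>) * (t * vk + (1 - t) * v3)
      = a / (x3 - \<mu>) * ((x3 - xk) * (t * vk + (1 - t) * v3))" by simp
  also have "\<dots> = a / (x3 - \<mu>) * ((x3 - \<mu>) * vk + (\<mu> - xk) * v3)" using inner by simp
  also have "\<dots> = a * vk + a * (\<mu> - xk) / (x3 - \<mu>) * v3" using assms(1) by (simp add: field_simps)
  finally show ?thesis .
qed

lemma core_strict:
  fixes x1 x2 x3 v1 v2 v3 a1 a2 a3 \<mu> :: real
  assumes "x1 \<le> \<mu>" "x2 \<le> \<mu>" "\<mu> < x3" "0 \<le> a1" "0 \<le> a2" "0 \<le> a3" "a1 + a2 + a3 = 1"
    "a1 * x1 + a2 * x2 + a3 * x3 = \<mu>"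
  shows "twop {(x1,v1),(x2,v2),(x3,v3)} \<mu> (a1 * v1 + a2 * v2 + a3 * v3)"
proof -
  define t1 where "t1 = (x3 - \<mu>) / (x3 - x1)"
  define t2 where "t2 = (x3 - \<mu>) / (x3 - x2)"
  define w1 where "w1 = t1 * v1 + (1 - t1) * v3"
  define w2 where "w2 = t2 * v2 + (1 - t2) * v3"
  define g1 where "g1 = a1 * (x3 - x1) / (x3 - \<mu>)"
  define g2 where "g2 = a2 * (x3 - x2) / (x3 - \<mu>)"
  have d1: "x3 - x1 > 0" and d2: "x3 - x2 > 0" and d: "x3 - \<mu> > 0" using assms by auto
  have t1m: "t1 * (x3 - x1) = x3 - \<mu>" using d1 by (simp add: t1_def)
  have t1: "0 \<le> t1" "t1 \<le> 1" "t1 * x1 + (1 - t1) * x3 = \<mu>"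
  proof -
    show "0 \<le> t1" "t1 \<le> 1" using d1 d assms(1) by (auto simp: t1_def field_simps)
    have "t1 * x1 + (1 - t1) * x3 = x3 - t1 * (x3 - x1)" by (simp add: algebra_simps)
    then show "t1 * x1 + (1 - t1) * x3 = \<mu>" using t1m by simp
  qed
  have t2m: "t2 * (x3 - x2) = x3 - \<mu>" using d2 by (simp add: t2_def)
  have t2: "0 \<le> t2" "t2 \<le> 1" "t2 * x2 + (1 - t2) * x3 = \<mu>"
  proof -
    show "0 \<le> t2" "t2 \<le> 1" using d2 d assms(2) by (auto simp: t2_def field_simps)
    have "t2 * x2 + (1 - t2) * x3 = x3 - t2 * (x3 - x2)" by (simp add: algebra_simps)
    then show "t2 * x2 + (1 - t2) * x3 = \<mu>" using t2m by simp
  qed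
  have key: "a1 * (\<mu> - x1) + a2 * (\<mu> - x2) = a3 * (x3 - \<mu>)"
  proof -
    have "a1 * (\<mu> - x1) + a2 * (\<mu> - x2) = (a1 + a2) * \<mu> - (a1 * x1 + a2 * x2)" by (simp add: algebra_simps)
    also have "\<dots> = (1 - a3) * \<mu> - (\<mu> - a3 * x3)" using assms(7,8) by (smt (verit))
    also have "\<dots> = a3 * (x3 - \<mu>)" by (simp add: algebra_simps)
    finally show ?thesis .
  qed
  have gs: "g1 + g2 = 1"
  proof -
    have "g1 + g2 = (a1 * (x3 - x1) + a2 * (x3 - x2)) / (x3 - \<mu>)" by (simp add: g1_def g2_def add_divide_distrib)
    also have "a1 * (x3 - x1) + a2 * (x3 - x2) = (a1 + a2) * (x3 - \<mu>) + (a1 * (\<mu> - x1) + a2 * (\<mu> - x2))"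
      by (simp add: algebra_simps)
    also have "\<dots> = (a1 + a2 + a3) * (x3 - \<mu>)" using key by (simp add: distrib_right)
    also have "\<dots> = (x3 - \<mu>)" using assms(7) by simp
    finally show ?thesis using d by simp
  qed
  have g0: "0 \<le> g1" "0 \<le> g2" using assms d1 d2 d by (auto simp: g1_def g2_def)
  have eq: "a1 * v1 + a2 * v2 + a3 * v3 = g1 * w1 + g2 * w2"
  proof -
    have "g1 * w1 = a1 * v1 + a1 * (\<mu> - x1) / (x3 - \<mu>) * v3"
      unfolding g1_def w1_def using gw_aux[OF d t1m] .
    moreover have "g2 * w2 = a2 * v2 + a2 * (\<mu> - x2) / (x3 - \<mu>) * v3"
      unfolding g2_def w2_def using gw_aux[OF d t2m] .
    moreover have "a1 * (\<mu> - x1) / (x3 - \<mu>) * v3 + a2 * (\<mu> - x2) / (x3 - \<mu>) * v3 = a3 * v3"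
    proof -
      have "a1 * (\<mu> - x1) / (x3 - \<mu>) * v3 + a2 * (\<mu> - x2) / (x3 - \<mu>) * v3
           = (a1 * (\<mu> - x1) + a2 * (\<mu> - x2)) / (x3 - \<mu>) * v3" by (simp only: add_divide_distrib distrib_right)
      also have "\<dots> = a3 * v3" using key d by simp
      finally show ?thesis .
    qed
    ultimately show ?thesis by simp
  qed
  have "g1 * w1 + g2 * w2 \<le> max w1 w2"
  proof -
    have "g1 * w1 + g2 * w2 \<le> g1 * max w1 w2 + g2 * max w1 w2"
      using g0 by (intro add_mono mult_left_mono) auto
    also have "\<dots> = (g1 + g2) * max w1 w2" by (simp add: distrib_right)
    also have "\<dots> = max w1 w2" using gs by simp
    finally show ?thesis .
  qed
  then show ?thesis
  proof (cases "w1 \<le> w2")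
    case True
    then show ?thesis using eq \<open>g1 * w1 + g2 * w2 \<le> max w1 w2\<close> t2
      by (intro twop_pair[of "(x2,v2)" _ "(x3,v3)" t2]) (auto simp: w2_def)
  next
    case False
    then show ?thesis using eq \<open>g1 * w1 + g2 * w2 \<le> max w1 w2\<close> t1
      by (intro twop_pair[of "(x1,v1)" _ "(x3,v3)" t1]) (auto simp: w1_def)
  qed
qed

lemma conv3_le:
  fixes a1 a2 a3 v1 v2 v3 :: real
  assumes "0 \<le> a1" "0 \<le> a2" "0 \<le> a3" "a1 + a2 + a3 = 1"
  shows "a1 * v1 + a2 * v2 + a3 * v3 \<le> max v1 (max v2 v3)"
proof -
  have "a1 * v1 + a2 * v2 + a3 * v3 \<le> a1 * max v1 (max v2 v3) + a2 * max v1 (max v2 v3) + a3 * max v1 (max v2 v3)"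
    using assms by (intro add_mono mult_left_mono) auto
  also have "\<dots> = (a1 + a2 + a3) * max v1 (max v2 v3)" by (simp add: distrib_right)
  finally show ?thesis using assms(4) by simp
qed

lemma core_eq:
  fixes x1 x2 x3 v1 v2 v3 a1 a2 a3 \<mu> :: real
  assumes "x1 \<le> \<mu>" "x2 \<le> \<mu>" "\<mu> = x3" "0 \<le> a1" "0 \<le> a2" "0 \<le> a3" "a1 + a2 + a3 = 1"
    "a1 * x1 + a2 * x2 + a3 * x3 = \<mu>"
  shows "twop {(x1,v1),(x2,v2),(x3,v3)} \<mu> (a1 * v1 + a2 * v2 + a3 * v3)"
proof -
  let ?S = "{(x1,v1),(x2,v2),(x3,v3)}"
  have key: "a1 * (\<mu> - x1) + a2 * (\<mu> - x2) = 0"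
  proof -
    have "a1 * (\<mu> - x1) + a2 * (\<mu> - x2) = (a1 + a2) * \<mu> - (a1 * x1 + a2 * x2)" by (simp add: algebra_simps)
    also have "\<dots> = (1 - a3) * \<mu> - (\<mu> - a3 * x3)" using assms(7,8) by (smt (verit))
    also have "\<dots> = 0" using assms(3) by (simp add: algebra_simps)
    finally show ?thesis .
  qed
  have n1: "0 \<le> a1 * (\<mu> - x1)" and n2: "0 \<le> a2 * (\<mu> - x2)" using assms by auto
  have z1: "a1 * (\<mu> - x1) = 0" and z2: "a2 * (\<mu> - x2) = 0" using key n1 n2 by linarith+
  obtain p1 where p1: "p1 \<in> ?S" "fst p1 = \<mu>" "a1 * v1 = a1 * snd p1"
  proof (cases "a1 = 0")
    case True then show ?thesis using that[of "(x3,v3)"] assms(3) by auto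
  next
    case False then have "x1 = \<mu>" using z1 by simp
    then show ?thesis using that[of "(x1,v1)"] by auto
  qed
  obtain p2 where p2: "p2 \<in> ?S" "fst p2 = \<mu>" "a2 * v2 = a2 * snd p2"
  proof (cases "a2 = 0")
    case True then show ?thesis using that[of "(x3,v3)"] assms(3) by auto
  next
    case False then have "x2 = \<mu>" using z2 by simp
    then show ?thesis using that[of "(x2,v2)"] by auto
  qed
  have V: "a1 * v1 + a2 * v2 + a3 * v3 \<le> max (snd p1) (max (snd p2) v3)"
  proof -
    have "a1 * v1 + a2 * v2 + a3 * v3 = a1 * snd p1 + a2 * snd p2 + a3 * v3" using p1(3) p2(3) by linarith
    then show ?thesis using conv3_le[OF assms(4-7), of "snd p1" "snd p2" v3] by simp
  qed
  show ?thesis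
  proof (cases "snd p1 \<ge> snd p2 \<and> snd p1 \<ge> v3")
    case True then show ?thesis using twop_single[OF p1(1), of "a1 * v1 + a2 * v2 + a3 * v3"] V p1 by auto
  next
    case False
    show ?thesis
    proof (cases "snd p2 \<ge> v3")
      case True then show ?thesis using twop_single[OF p2(1), of "a1 * v1 + a2 * v2 + a3 * v3"] V p2 False by auto
    next
      case False2: False
      then show ?thesis using twop_single[of "(x3,v3)" ?S "a1 * v1 + a2 * v2 + a3 * v3"] V False assms(3) by auto
    qed
  qed
qed

lemma core_le:
  fixes x1 x2 x3 v1 v2 v3 a1 a2 a3 \<mu> :: real
  assumes "x1 \<le> \<mu>" "x2 \<le> \<mu>" "\<mu> \<le> x3" "0 \<le> a1" "0 \<le> a2" "0 \<le> a3" "a1 + a2 + a3 = 1"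
    "a1 * x1 + a2 * x2 + a3 * x3 = \<mu>"
  shows "twop {(x1,v1),(x2,v2),(x3,v3)} \<mu> (a1 * v1 + a2 * v2 + a3 * v3)"
  using assms core_eq[of x1 \<mu> x2 x3 a1 a2 a3] core_strict[of x1 \<mu> x2 x3 a1 a2 a3]
  by (cases "\<mu> = x3") auto

lemma twop_neg:
  assumes "twop ((\<lambda>(x,v). (-x, v)) ` S) (-\<mu>) V"
  shows "twop S \<mu> V"
proof -
  obtain p1 p2 t where "p1 \<in> (\<lambda>(x,v). (-x, v)) ` S" "p2 \<in> (\<lambda>(x,v). (-x, v)) ` S" "0 \<le> t" "t \<le> 1"
    "t * fst p1 + (1-t) * fst p2 = -\<mu>" "V \<le> t * snd p1 + (1-t) * snd p2"
    using assms unfolding twop_def by blast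
  then obtain q1 q2 where "q1 \<in> S" "q2 \<in> S" "p1 = (- fst q1, snd q1)" "p2 = (- fst q2, snd q2)"
    by auto
  then show ?thesis using twop_pair[of q1 S q2 t \<mu> V] \<open>0 \<le> t\<close> \<open>t \<le> 1\<close>
      \<open>t * fst p1 + (1-t) * fst p2 = -\<mu>\<close> \<open>V \<le> t * snd p1 + (1-t) * snd p2\<close>
    by (auto simp: algebra_simps)
qed

lemma three_sorted:
  fixes x1 x2 x3 v1 v2 v3 a1 a2 a3 :: real
  assumes "x1 \<le> x2" "x2 \<le> x3" "0 \<le> a1" "0 \<le> a2" "0 \<le> a3" "a1 + a2 + a3 = 1"
  shows "twop {(x1,v1),(x2,v2),(x3,v3)} (a1 * x1 + a2 * x2 + a3 * x3) (a1 * v1 + a2 * v2 + a3 * v3)"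
proof -
  define \<mu> where "\<mu> = a1 * x1 + a2 * x2 + a3 * x3"
  have lo: "x1 \<le> \<mu>"
  proof -
    have "a1 * x1 + a2 * x1 + a3 * x1 \<le> \<mu>" unfolding \<mu>_def using assms
      by (intro add_mono mult_left_mono) auto
    moreover have "a1 * x1 + a2 * x1 + a3 * x1 = x1" using assms(6) by (metis distrib_right mult_1)
    ultimately show ?thesis by simp
  qed
  have hi: "\<mu> \<le> x3"
  proof -
    have "\<mu> \<le> a1 * x3 + a2 * x3 + a3 * x3" unfolding \<mu>_def using assms
      by (intro add_mono mult_left_mono) auto
    moreover have "a1 * x3 + a2 * x3 + a3 * x3 = x3" using assms(6) by (metis distrib_right mult_1)
    ultimately show ?thesis by simp
  qed
  show ?thesis
  proof (cases "x2 \<le> \<mu>")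
    case True
    then show ?thesis using core_le[of x1 \<mu> x2 x3 a1 a2 a3 v1 v2 v3] lo hi assms unfolding \<mu>_def by blast
  next
    case False
    have m: "a2 * (-x2) + a3 * (-x3) + a1 * (-x1) = -\<mu>" unfolding \<mu>_def by (simp add: algebra_simps)
    have "twop {(-x2,v2),(-x3,v3),(-x1,v1)} (-\<mu>) (a2 * v2 + a3 * v3 + a1 * v1)"
    proof (rule core_le)
      show "- x2 \<le> - \<mu>" "- x3 \<le> - \<mu>" "- \<mu> \<le> - x1" using False lo assms by auto
      show "0 \<le> a2" "0 \<le> a3" "0 \<le> a1" "a2 + a3 + a1 = 1" using assms by auto
      show "a2 * (-x2) + a3 * (-x3) + a1 * (-x1) = -\<mu>" by (rule m)
    qed
    moreover have "{(-x2,v2),(-x3,v3),(-x1,v1)} = (\<lambda>(x,v). (-x, v)) ` {(x1,v1),(x2,v2),(x3,v3)}" by auto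
    moreover have "a2 * v2 + a3 * v3 + a1 * v1 = a1 * v1 + a2 * v2 + a3 * v3" by simp
    ultimately show ?thesis using twop_neg[of "{(x1,v1),(x2,v2),(x3,v3)}" \<mu>] unfolding \<mu>_def by simp
  qed
qed

lemma three:
  fixes x1 x2 x3 v1 v2 v3 a1 a2 a3 :: real
  assumes "0 \<le> a1" "0 \<le> a2" "0 \<le> a3" "a1 + a2 + a3 = 1"
  shows "twop {(x1,v1),(x2,v2),(x3,v3)} (a1 * x1 + a2 * x2 + a3 * x3) (a1 * v1 + a2 * v2 + a3 * v3)"
proof -
  have c1: "{(x2,v2),(x1,v1),(x3,v3)} = {(x1,v1),(x2,v2),(x3,v3)}" by auto
  have c2: "{(x1,v1),(x3,v3),(x2,v2)} = {(x1,v1),(x2,v2),(x3,v3)}" by auto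
  have c3: "{(x2,v2),(x3,v3),(x1,v1)} = {(x1,v1),(x2,v2),(x3,v3)}" by auto
  have c4: "{(x3,v3),(x1,v1),(x2,v2)} = {(x1,v1),(x2,v2),(x3,v3)}" by auto
  have c5: "{(x3,v3),(x2,v2),(x1,v1)} = {(x1,v1),(x2,v2),(x3,v3)}" by auto
  consider "x1 \<le> x2 \<and> x2 \<le> x3" | "x2 \<le> x1 \<and> x1 \<le> x3" | "x1 \<le> x3 \<and> x3 \<le> x2"
    | "x2 \<le> x3 \<and> x3 \<le> x1" | "x3 \<le> x1 \<and> x1 \<le> x2" | "x3 \<le> x2 \<and> x2 \<le> x1" by linarith
  then show ?thesis
  proof cases
    case 1 then show ?thesis using three_sorted assms by blast
  next
    case 2
    have h: "twop {(x2,v2),(x1,v1),(x3,v3)} (a2 * x2 + a1 * x1 + a3 * x3) (a2 * v2 + a1 * v1 + a3 * v3)"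
      by (rule three_sorted) (use 2 assms in linarith)+
    have e1: "a2 * x2 + a1 * x1 + a3 * x3 = a1 * x1 + a2 * x2 + a3 * x3" by linarith
    have e2: "a2 * v2 + a1 * v1 + a3 * v3 = a1 * v1 + a2 * v2 + a3 * v3" by linarith
    show ?thesis using h unfolding e1 e2 c1 .
  next
    case 3
    have h: "twop {(x1,v1),(x3,v3),(x2,v2)} (a1 * x1 + a3 * x3 + a2 * x2) (a1 * v1 + a3 * v3 + a2 * v2)"
      by (rule three_sorted) (use 3 assms in linarith)+
    have e1: "a1 * x1 + a3 * x3 + a2 * x2 = a1 * x1 + a2 * x2 + a3 * x3" by linarith
    have e2: "a1 * v1 + a3 * v3 + a2 * v2 = a1 * v1 + a2 * v2 + a3 * v3" by linarith
    show ?thesis using h unfolding e1 e2 c2 .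
  next
    case 4
    have h: "twop {(x2,v2),(x3,v3),(x1,v1)} (a2 * x2 + a3 * x3 + a1 * x1) (a2 * v2 + a3 * v3 + a1 * v1)"
      by (rule three_sorted) (use 4 assms in linarith)+
    have e1: "a2 * x2 + a3 * x3 + a1 * x1 = a1 * x1 + a2 * x2 + a3 * x3" by linarith
    have e2: "a2 * v2 + a3 * v3 + a1 * v1 = a1 * v1 + a2 * v2 + a3 * v3" by linarith
    show ?thesis using h unfolding e1 e2 c3 .
  next
    case 5
    have h: "twop {(x3,v3),(x1,v1),(x2,v2)} (a3 * x3 + a1 * x1 + a2 * x2) (a3 * v3 + a1 * v1 + a2 * v2)"
      by (rule three_sorted) (use 5 assms in linarith)+
    have e1: "a3 * x3 + a1 * x1 + a2 * x2 = a1 * x1 + a2 * x2 + a3 * x3" by linarith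
    have e2: "a3 * v3 + a1 * v1 + a2 * v2 = a1 * v1 + a2 * v2 + a3 * v3" by linarith
    show ?thesis using h unfolding e1 e2 c4 .
  next
    case 6
    have h: "twop {(x3,v3),(x2,v2),(x1,v1)} (a3 * x3 + a2 * x2 + a1 * x1) (a3 * v3 + a2 * v2 + a1 * v1)"
      by (rule three_sorted) (use 6 assms in linarith)+
    have e1: "a3 * x3 + a2 * x2 + a1 * x1 = a1 * x1 + a2 * x2 + a3 * x3" by linarith
    have e2: "a3 * v3 + a2 * v2 + a1 * v1 = a1 * v1 + a2 * v2 + a3 * v3" by linarith
    show ?thesis using h unfolding e1 e2 c5 .
  qed
qed

lemma twop_mix:
  assumes "twop S y b" "p \<in> S" "0 \<le> t" "t \<le> 1"
  shows "twop S (t * y + (1 - t) * fst p) (t * b + (1 - t) * snd p)"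
proof -
  obtain p3 p4 t2 where h: "p3 \<in> S" "p4 \<in> S" "0 \<le> t2" "t2 \<le> 1" "t2 * fst p3 + (1-t2) * fst p4 = y"
    "b \<le> t2 * snd p3 + (1-t2) * snd p4"
    using assms(1) unfolding twop_def by blast
  obtain x3 v3 where p3: "p3 = (x3, v3)" by fastforce
  obtain x4 v4 where p4: "p4 = (x4, v4)" by fastforce
  obtain xp vp where pp: "p = (xp, vp)" by fastforce
  have "twop {(x3,v3),(x4,v4),(xp,vp)} ((t * t2) * x3 + (t * (1 - t2)) * x4 + (1 - t) * xp)
         ((t * t2) * v3 + (t * (1 - t2)) * v4 + (1 - t) * vp)"
    by (rule three) (use assms h mult_left_le[of t2 t] in \<open>auto simp: algebra_simps\<close>)
  moreover have "(t * t2) * x3 + (t * (1 - t2)) * x4 + (1 - t) * xp = t * y + (1 - t) * fst p"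
  proof -
    have yeq: "y = t2 * x3 + (1 - t2) * x4" using h(5) p3 p4 by simp
    show ?thesis unfolding yeq using pp by (simp add: algebra_simps)
  qed
  moreover have "t * b + (1 - t) * snd p \<le> (t * t2) * v3 + (t * (1 - t2)) * v4 + (1 - t) * vp"
  proof -
    have "t * b \<le> t * (t2 * v3 + (1 - t2) * v4)" using h(6) p3 p4 assms(3) by (simp add: mult_left_mono)
    then show ?thesis using pp by (simp add: algebra_simps)
  qed
  moreover have "{(x3,v3),(x4,v4),(xp,vp)} \<subseteq> S" using h p3 p4 pp assms(2) by auto
  ultimately show ?thesis using twop_mono by metis
qed

lemma twop_concave:
  assumes "twop S x a" "twop S y b" "0 \<le> w" "w \<le> 1"
  shows "twop S (w * x + (1 - w) * y) (w * a + (1 - w) * b)"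
proof -
  obtain p1 p2 t1 where h: "p1 \<in> S" "p2 \<in> S" "0 \<le> t1" "t1 \<le> 1" "t1 * fst p1 + (1-t1) * fst p2 = x"
    "a \<le> t1 * snd p1 + (1-t1) * snd p2"
    using assms(1) unfolding twop_def by blast
  obtain x1 v1 where p1: "p1 = (x1, v1)" by fastforce
  obtain x2 v2 where p2: "p2 = (x2, v2)" by fastforce
  define z where "z = w * x + (1 - w) * y"
  define V0 where "V0 = (w * t1) * v1 + (w * (1 - t1)) * v2 + (1 - w) * b"
  have T: "twop {(x1,v1),(x2,v2),(y,b)} ((w * t1) * x1 + (w * (1 - t1)) * x2 + (1 - w) * y) V0"
    unfolding V0_def by (rule three) (use assms h mult_left_le[of t1 w] in \<open>auto simp: algebra_simps\<close>)
  have zeq: "(w * t1) * x1 + (w * (1 - t1)) * x2 + (1 - w) * y = z"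
  proof -
    have xeq: "x = t1 * x1 + (1 - t1) * x2" using h(5) p1 p2 by simp
    show ?thesis unfolding z_def xeq by (simp add: algebra_simps)
  qed
  have Vle: "w * a + (1 - w) * b \<le> V0"
  proof -
    have "w * a \<le> w * (t1 * v1 + (1 - t1) * v2)" using h(6) p1 p2 assms(3) by (simp add: mult_left_mono)
    then show ?thesis unfolding V0_def by (simp add: algebra_simps)
  qed
  obtain pa pb t where g: "pa \<in> {(x1,v1),(x2,v2),(y,b)}" "pb \<in> {(x1,v1),(x2,v2),(y,b)}" "0 \<le> t" "t \<le> 1"
    "t * fst pa + (1-t) * fst pb = z" "V0 \<le> t * snd pa + (1-t) * snd pb"
  proof -
    have "twop {(x1,v1),(x2,v2),(y,b)} z V0" using T zeq by simp
    then show ?thesis using that unfolding twop_def by blast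
  qed
  have PS: "(x1,v1) \<in> S" "(x2,v2) \<in> S" using h p1 p2 by auto
  have ca: "pa = (y,b) \<or> pa \<in> S" and cb: "pb = (y,b) \<or> pb \<in> S" using g PS by auto
  have "twop S z V0"
  proof (cases "pa = (y,b)")
    case A: True
    show ?thesis
    proof (cases "pb = (y,b)")
      case True
      then have "z = y" "V0 \<le> b" using g A by (auto simp: algebra_simps)
      then show ?thesis using assms(2) twop_mono by blast
    next
      case False
      then have "pb \<in> S" using cb by simp
      from twop_mix[OF assms(2) this g(3,4)] show ?thesis
        using g A twop_mono by (metis fst_conv snd_conv order_refl)
    qed
  next
    case A: False
    then have paS: "pa \<in> S" using ca by simp
    show ?thesis
    proof (cases "pb = (y,b)")
      case True
      have "0 \<le> 1 - t" "1 - t \<le> 1" using g by auto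
      from twop_mix[OF assms(2) paS this] show ?thesis
        using g True twop_mono[of S z "(1 - t) * b + (1 - (1 - t)) * snd pa" S V0]
        by (auto simp: algebra_simps)
    next
      case False
      then have "pb \<in> S" using cb by simp
      then show ?thesis using paS g twop_pair by blast
    qed
  qed
  then show ?thesis unfolding z_def using Vle twop_mono by blast
qed

definition Spts :: "gtree \<Rightarrow> (nat list \<Rightarrow> real \<Rightarrow> ereal) \<Rightarrow> nat list \<Rightarrow> (real \<times> real) set" where
  "Spts t U p = {(x,v). \<exists>i < length (kids (subtree t p)). ereal v \<le> child_fn t U p i x}"

lemma ereal_mult_pos_minf: "0 < w \<Longrightarrow> ereal w * (- \<infinity>) = - \<infinity>"
  by simp

lemma obj_split:
  assumes "learned_epfs t U" "valid_pos t p" "feasible_choice t p \<mu> (i, j, w, \<mu>1, \<mu>2)"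
  shows "i < length (kids (subtree t p))" "j < length (kids (subtree t p))" "0 \<le> w" "w \<le> 1"
    "w * \<mu>1 + (1 - w) * \<mu>2 = \<mu>"
    "child_fn t U p i \<mu>1 \<noteq> \<infinity>" "child_fn t U p j \<mu>2 \<noteq> \<infinity>"
    "choice_obj t U p (i, j, w, \<mu>1, \<mu>2) = ereal w * child_fn t U p i \<mu>1 + ereal (1 - w) * child_fn t U p j \<mu>2"
  using assms child_fn_notinf[OF assms(1,2)] unfolding feasible_choice_def choice_obj_def by auto

lemma obj_notinf:
  assumes "learned_epfs t U" "valid_pos t p" "feasible_choice t p \<mu> c"
  shows "choice_obj t U p c \<noteq> \<infinity>"
proof -
  obtain i j w \<mu>1 \<mu>2 where c: "c = (i, j, w, \<mu>1, \<mu>2)" by (cases c) auto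
  note o = obj_split[OF assms(1,2) assms(3)[unfolded c]]
  obtain X where X: "child_fn t U p i \<mu>1 = X" by simp
  obtain Y where Y: "child_fn t U p j \<mu>2 = Y" by simp
  have "ereal w * X \<noteq> \<infinity>" using o(3,6) X by (cases X) (auto simp: ereal_mult_infty)
  moreover have "ereal (1 - w) * Y \<noteq> \<infinity>" using o(4,7) Y by (cases Y) (auto simp: ereal_mult_infty)
  ultimately show ?thesis using o(8) X Y c by simp
qed

lemma obj_to_twop:
  assumes "learned_epfs t U" "valid_pos t p" "feasible_choice t p \<mu> c" "ereal a \<le> choice_obj t U p c"
  shows "twop (Spts t U p) \<mu> a"
proof -
  obtain i j w \<mu>1 \<mu>2 where c: "c = (i, j, w, \<mu>1, \<mu>2)" by (cases c) auto
  note o = obj_split[OF assms(1,2) assms(3)[unfolded c]]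
  obtain X where X: "child_fn t U p i \<mu>1 = X" by simp
  obtain Y where Y: "child_fn t U p j \<mu>2 = Y" by simp
  have A: "ereal a \<le> ereal w * X + ereal (1 - w) * Y" using assms(4) o(8) c X Y by simp
  consider "w = 0" | "w = 1" | "0 < w \<and> w < 1" using o(3,4) by linarith
  then show ?thesis
  proof cases
    case 1
    then have "ereal a \<le> Y" using A by (simp add: zero_ereal_def[symmetric] one_ereal_def[symmetric])
    then have "(\<mu>2, a) \<in> Spts t U p" using o(2) Y unfolding Spts_def by auto
    moreover have "\<mu>2 = \<mu>" using o(5) 1 by simp
    ultimately show ?thesis using twop_single[of "(\<mu>2, a)" "Spts t U p" a] by simp
  next
    case 2
    then have "ereal a \<le> X" using A by (simp add: zero_ereal_def[symmetric] one_ereal_def[symmetric])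
    then have "(\<mu>1, a) \<in> Spts t U p" using o(1) X unfolding Spts_def by auto
    moreover have "\<mu>1 = \<mu>" using o(5) 2 by simp
    ultimately show ?thesis using twop_single[of "(\<mu>1, a)" "Spts t U p" a] by simp
  next
    case 3
    have Xn: "X \<noteq> - \<infinity>"
    proof
      assume "X = - \<infinity>"
      then have "ereal w * X + ereal (1 - w) * Y = - \<infinity>" using 3 o(7) Y by (cases Y) auto
      then have "ereal a \<le> - \<infinity>" using A by (simp only:)
      then show False by simp
    qed
    have Yn: "Y \<noteq> - \<infinity>"
    proof
      assume "Y = - \<infinity>"
      then have "ereal w * X + ereal (1 - w) * Y = - \<infinity>" using 3 o(6) X by (cases X) auto
      then have "ereal a \<le> - \<infinity>" using A by (simp only:)
      then show False by simp
    qed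
    obtain x' where x': "X = ereal x'" using Xn o(6) X by (cases X) auto
    obtain y' where y': "Y = ereal y'" using Yn o(7) Y by (cases Y) auto
    have "(\<mu>1, x') \<in> Spts t U p" "(\<mu>2, y') \<in> Spts t U p" using o(1,2) X Y x' y' unfolding Spts_def by auto
    moreover have "a \<le> w * x' + (1 - w) * y'" using A x' y' by simp
    ultimately show ?thesis using twop_pair[of "(\<mu>1, x')" "Spts t U p" "(\<mu>2, y')" w \<mu> a] o(3,4,5) by simp
  qed
qed

lemma twop_to_obj:
  assumes "twop (Spts t U p) \<mu> a"
  shows "\<exists>c. feasible_choice t p \<mu> c \<and> ereal a \<le> choice_obj t U p c"
proof -
  obtain p1 p2 w where h: "p1 \<in> Spts t U p" "p2 \<in> Spts t U p" "0 \<le> w" "w \<le> 1"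
    "w * fst p1 + (1-w) * fst p2 = \<mu>" "a \<le> w * snd p1 + (1-w) * snd p2"
    using assms unfolding twop_def by blast
  obtain x1 v1 i where p1: "p1 = (x1, v1)" "i < length (kids (subtree t p))" "ereal v1 \<le> child_fn t U p i x1"
    using h(1) unfolding Spts_def by auto
  obtain x2 v2 j where p2: "p2 = (x2, v2)" "j < length (kids (subtree t p))" "ereal v2 \<le> child_fn t U p j x2"
    using h(2) unfolding Spts_def by auto
  have f: "feasible_choice t p \<mu> (i, j, w, x1, x2)" using h p1 p2 unfolding feasible_choice_def by simp
  have "ereal a \<le> ereal (w * v1 + (1 - w) * v2)" using h(6) p1 p2 by simp
  also have "\<dots> = ereal w * ereal v1 + ereal (1 - w) * ereal v2" by simp
  also have "\<dots> \<le> ereal w * child_fn t U p i x1 + ereal (1 - w) * child_fn t U p j x2"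
    using h(3,4) p1(3) p2(3) by (intro add_mono ereal_mult_left_mono) auto
  also have "\<dots> = choice_obj t U p (i, j, w, x1, x2)" unfolding choice_obj_def by simp
  finally show ?thesis using f by blast
qed

lemma target_le_obj:
  assumes L: "learned_epfs t U" and I: "induced_selection t U sel" and v: "valid_pos t p"
    and nl: "\<not> is_leaf (subtree t p)"
  shows "target t U p \<mu> \<le> choice_obj t U p (sel p \<mu>)"
proof -
  define h where "h = (\<lambda>\<mu>. choice_obj t U p (sel p \<mu>))"
  have mx: "feasible_choice t p x (sel p x)" "\<And>c. feasible_choice t p x c \<Longrightarrow> choice_obj t U p c \<le> h x" for x
    using I v nl unfolding induced_selection_def is_maximizer_def h_def by auto
  have conc: "concave_ext h"
    unfolding concave_ext_def
  proof (intro allI impI)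
    fix x y a b w :: real
    assume w: "0 \<le> w" "w \<le> 1" and ha: "ereal a \<le> h x" and hb: "ereal b \<le> h y"
    have "twop (Spts t U p) x a" using obj_to_twop[OF L v mx(1)] ha unfolding h_def by blast
    moreover have "twop (Spts t U p) y b" using obj_to_twop[OF L v mx(1)] hb unfolding h_def by blast
    ultimately have "twop (Spts t U p) (w * x + (1 - w) * y) (w * a + (1 - w) * b)"
      using twop_concave w by blast
    then obtain c where "feasible_choice t p (w * x + (1 - w) * y) c"
      "ereal (w * a + (1 - w) * b) \<le> choice_obj t U p c" using twop_to_obj by blast
    then show "ereal (w * a + (1 - w) * b) \<le> h (w * x + (1 - w) * y)" using mx(2) order_trans by blast
  qed
  have ninf: "\<forall>x. h x \<noteq> \<infinity>" using obj_notinf[OF L v mx(1)] unfolding h_def by blast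
  have ge: "\<forall>x. (SUP i\<in>{..<length (kids (subtree t p))}. child_fn t U p i x) \<le> h x"
  proof
    fix x
    show "(SUP i\<in>{..<length (kids (subtree t p))}. child_fn t U p i x) \<le> h x"
    proof (rule SUP_least)
      fix i assume i: "i \<in> {..<length (kids (subtree t p))}"
      have f: "feasible_choice t p x (i, i, 1, x, x)" using i unfolding feasible_choice_def by simp
      have "choice_obj t U p (i, i, 1, x, x) = child_fn t U p i x"
        unfolding choice_obj_def by (simp add: zero_ereal_def[symmetric] one_ereal_def[symmetric])
      then show "child_fn t U p i x \<le> h x" using mx(2)[OF f] by simp
    qed
  qed
  have "target t U p \<mu> = cenv (\<lambda>\<mu>. SUP i\<in>{..<length (kids (subtree t p))}. child_fn t U p i \<mu>) \<mu>"
    unfolding target_def using nl by simp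
  also have "\<dots> \<le> h \<mu>" unfolding cenv_def
    by (rule Inf_lower) (use conc ninf ge in blast)
  finally show ?thesis unfolding h_def .
qed

lemma obj_lower_split:
  assumes "learned_epfs t U" "valid_pos t p" "feasible_choice t p \<mu> (i, j, w, \<mu>1, \<mu>2)"
    "ereal a \<le> choice_obj t U p (i, j, w, \<mu>1, \<mu>2)"
  shows "\<exists>c1 c2. a \<le> w * c1 + (1 - w) * c2 \<and> (0 < w \<longrightarrow> ereal c1 \<le> child_fn t U p i \<mu>1)
     \<and> (w < 1 \<longrightarrow> ereal c2 \<le> child_fn t U p j \<mu>2)"
proof -
  note o = obj_split[OF assms(1,2,3)]
  obtain X where X: "child_fn t U p i \<mu>1 = X" by simp
  obtain Y where Y: "child_fn t U p j \<mu>2 = Y" by simp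
  have A: "ereal a \<le> ereal w * X + ereal (1 - w) * Y" using assms(4) o(8) X Y by simp
  consider "w = 0" | "w = 1" | "0 < w \<and> w < 1" using o(3,4) by linarith
  then show ?thesis
  proof cases
    case 1
    then have "ereal a \<le> Y" using A by (simp add: zero_ereal_def[symmetric] one_ereal_def[symmetric])
    then show ?thesis using 1 Y by (intro exI[of _ 0] exI[of _ a]) auto
  next
    case 2
    then have "ereal a \<le> X" using A by (simp add: zero_ereal_def[symmetric] one_ereal_def[symmetric])
    then show ?thesis using 2 X by (intro exI[of _ a] exI[of _ 0]) auto
  next
    case 3
    have Xn: "X \<noteq> - \<infinity>"
    proof
      assume "X = - \<infinity>"
      then have "ereal w * X + ereal (1 - w) * Y = - \<infinity>" using 3 o(7) Y by (cases Y) auto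
      then have "ereal a \<le> - \<infinity>" using A by (simp only:)
      then show False by simp
    qed
    have Yn: "Y \<noteq> - \<infinity>"
    proof
      assume "Y = - \<infinity>"
      then have "ereal w * X + ereal (1 - w) * Y = - \<infinity>" using 3 o(6) X by (cases X) auto
      then have "ereal a \<le> - \<infinity>" using A by (simp only:)
      then show False by simp
    qed
    obtain x' where x': "X = ereal x'" using Xn o(6) X by (cases X) auto
    obtain y' where y': "Y = ereal y'" using Yn o(7) Y by (cases Y) auto
    have "a \<le> w * x' + (1 - w) * y'" using A x' y' by simp
    then show ?thesis using X Y x' y' by (intro exI[of _ x'] exI[of _ y']) auto
  qed
qed

lemma child_fn_lower:
  "ereal b \<le> child_fn t U p i x \<Longrightarrow> ereal b \<le> U (p @ [i]) x \<and> beta t p i \<le> ereal x"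
  by (simp add: child_fn_eq split: if_splits)

lemma leaf_lower:
  assumes "learned_epfs t U" "valid_pos t p" "is_leaf (subtree t p)" "ereal a \<le> U p \<mu>"
  shows "\<mu> = rew2 (subtree t p) \<and> a \<le> rew1 (subtree t p)"
  using assms leaf_U[OF assms(1-3)] unfolding Uleaf_def by (auto split: if_splits)

context
  fixes t :: gtree and U :: "nat list \<Rightarrow> real \<Rightarrow> ereal" and \<epsilon> :: real and sel :: "nat list \<Rightarrow> real \<Rightarrow> choice"
  assumes L: "learned_epfs t U"
    and E: "\<forall>p. valid_pos t p \<longrightarrow> Linf (U p) (target t U p) \<le> ereal \<epsilon>"
    and I: "induced_selection t U sel"
begin

lemma eps_nonneg: "0 \<le> \<epsilon>"
proof -
  have "0 \<le> Linf (U []) (target t U [])" by (rule Linf_nonneg)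
  also have "\<dots> \<le> ereal \<epsilon>" using E by simp
  finally show ?thesis by simp
qed

lemma obj_lower:
  assumes v: "valid_pos t p" and nl: "\<not> is_leaf (subtree t p)" and a: "ereal a \<le> U p \<mu>"
  shows "ereal (a - \<epsilon>) \<le> choice_obj t U p (sel p \<mu>)"
proof -
  have "ereal (a - \<epsilon>) \<le> target t U p \<mu>" using Linf_lower2[OF E[rule_format, OF v] a] .
  also have "\<dots> \<le> choice_obj t U p (sel p \<mu>)" by (rule target_le_obj[OF L I v nl])
  finally show ?thesis .
qed

lemma sel_feasible:
  assumes v: "valid_pos t p" and nl: "\<not> is_leaf (subtree t p)"
  shows "feasible_choice t p \<mu> (sel p \<mu>)"
  using I v nl unfolding induced_selection_def is_maximizer_def by auto

lemma play_lower:
  "\<forall>p \<mu> a. valid_pos t p \<longrightarrow> depth (subtree t p) \<le> n \<longrightarrow> ereal a \<le> U p \<mu> \<longrightarrow>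
     a - n * \<epsilon> \<le> play_value t sel n p \<mu>"
proof (induction n)
  case 0
  show ?case
  proof (intro allI impI)
    fix p \<mu> a assume v: "valid_pos t p" and d: "depth (subtree t p) \<le> 0" and a: "ereal a \<le> U p \<mu>"
    have "is_leaf (subtree t p)" using depth0_leaf d by blast
    then show "a - real 0 * \<epsilon> \<le> play_value t sel 0 p \<mu>" using leaf_lower[OF L v _ a] by simp
  qed
next
  case (Suc n)
  show ?case
  proof (intro allI impI)
    fix p \<mu> a assume v: "valid_pos t p" and d: "depth (subtree t p) \<le> Suc n" and a: "ereal a \<le> U p \<mu>"
    show "a - real (Suc n) * \<epsilon> \<le> play_value t sel (Suc n) p \<mu>"
    proof (cases "is_leaf (subtree t p)")
      case True
      have "0 \<le> (1 + real n) * \<epsilon>" using eps_nonneg by simp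
      then show ?thesis using leaf_lower[OF L v True a] True by simp
    next
      case nl: False
      obtain i j w \<mu>1 \<mu>2 where s: "sel p \<mu> = (i, j, w, \<mu>1, \<mu>2)" by (cases "sel p \<mu>") auto
      have f: "feasible_choice t p \<mu> (i, j, w, \<mu>1, \<mu>2)" using sel_feasible[OF v nl, of \<mu>] s by simp
      note o = obj_split[OF L v f]
      obtain c1 c2 where c: "a - \<epsilon> \<le> w * c1 + (1 - w) * c2"
        "0 < w \<longrightarrow> ereal c1 \<le> child_fn t U p i \<mu>1" "w < 1 \<longrightarrow> ereal c2 \<le> child_fn t U p j \<mu>2"
        using obj_lower_split[OF L v f, of "a - \<epsilon>"] obj_lower[OF v nl a] s by auto
      define Pi where "Pi = play_value t sel n (p @ [i]) \<mu>1"
      define Pj where "Pj = play_value t sel n (p @ [j]) \<mu>2"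
      have "w * (c1 - n * \<epsilon>) \<le> w * Pi"
      proof (cases "w = 0")
        case False
        then have "ereal c1 \<le> U (p @ [i]) \<mu>1" using c(2) o(3) child_fn_lower by force
        then have "c1 - n * \<epsilon> \<le> Pi" unfolding Pi_def
          using Suc.IH v o(1) depth_child_le[OF d nl o(1)] by (simp add: valid_child)
        then show ?thesis using o(3) by (simp add: mult_left_mono)
      qed simp
      moreover have "(1 - w) * (c2 - n * \<epsilon>) \<le> (1 - w) * Pj"
      proof (cases "w = 1")
        case False
        then have "ereal c2 \<le> U (p @ [j]) \<mu>2" using c(3) o(4) child_fn_lower by force
        then have "c2 - n * \<epsilon> \<le> Pj" unfolding Pj_def
          using Suc.IH v o(2) depth_child_le[OF d nl o(2)] by (simp add: valid_child)
        then show ?thesis using o(4) by (simp add: mult_left_mono)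
      qed simp
      moreover have "play_value t sel (Suc n) p \<mu> = w * Pi + (1 - w) * Pj"
        using nl s unfolding Pi_def Pj_def by simp
      ultimately show ?thesis using c(1) by (simp add: algebra_simps)
    qed
  qed
qed

end

definition Ext :: "gtree \<Rightarrow> nat list \<Rightarrow> nat list set" where
  "Ext t c = {l \<in> leaf_positions t. \<exists>r. l = c @ r}"

lemma finite_Ext: "finite (Ext t c)"
  unfolding Ext_def using finite_LP by auto

lemma valid_leaf_Nil: "is_leaf s \<Longrightarrow> valid_pos s r \<Longrightarrow> r = []"
  by (cases s; cases r) auto

lemma Ext_leaf:
  assumes "valid_pos t p" "is_leaf (subtree t p)"
  shows "Ext t p = {p}"
proof -
  have "l = p" if lE: "l \<in> Ext t p" for l
  proof -
    obtain r where "l = p @ r" "valid_pos t l" using lE unfolding Ext_def leaf_positions_def by auto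
    then have "valid_pos (subtree t p) r" by (simp add: valid_append)
    then show ?thesis using valid_leaf_Nil assms(2) \<open>l = p @ r\<close> by simp
  qed
  moreover have "p \<in> Ext t p" using assms unfolding Ext_def leaf_positions_def by auto
  ultimately show ?thesis by blast
qed

lemma Ext_node:
  assumes "valid_pos t p" "\<not> is_leaf (subtree t p)"
  shows "Ext t p = (\<Union>i<length (kids (subtree t p)). Ext t (p @ [i]))"
proof
  show "Ext t p \<subseteq> (\<Union>i<length (kids (subtree t p)). Ext t (p @ [i]))"
  proof
    fix l assume l: "l \<in> Ext t p"
    then obtain r where r: "l = p @ r" "valid_pos t l" "is_leaf (subtree t l)"
      unfolding Ext_def leaf_positions_def by auto
    have "r \<noteq> []" using r assms(2) by auto
    then obtain i r' where "r = i # r'" by (cases r) auto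
    then have "i < length (kids (subtree t p))" using r by (simp add: valid_append)
    moreover have "l \<in> Ext t (p @ [i])" using l r \<open>r = i # r'\<close> unfolding Ext_def by auto
    ultimately show "l \<in> (\<Union>i<length (kids (subtree t p)). Ext t (p @ [i]))" by blast
  qed
next
  show "(\<Union>i<length (kids (subtree t p)). Ext t (p @ [i])) \<subseteq> Ext t p"
    unfolding Ext_def by auto
qed

lemma Ext_disj: "i \<noteq> j \<Longrightarrow> Ext t (p @ [i]) \<inter> Ext t (p @ [j]) = {}"
  unfolding Ext_def by auto

lemma sum_Ext_node:
  assumes "valid_pos t p" "\<not> is_leaf (subtree t p)"
  shows "(\<Sum>l\<in>Ext t p. f l) = (\<Sum>i<length (kids (subtree t p)). \<Sum>l\<in>Ext t (p @ [i]). f l)"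
  unfolding Ext_node[OF assms]
  by (rule sum.UNION_disjoint) (auto simp: finite_Ext Ext_disj)

lemma Ext_sub: "l \<in> Ext t c \<Longrightarrow> l \<in> leaf_positions t"
  unfolding Ext_def by auto

lemma sum_Ext_zero:
  fixes q f :: "nat list \<Rightarrow> real"
  assumes "\<forall>l. 0 \<le> q l" "(\<Sum>l\<in>Ext t c. q l) = 0"
  shows "(\<Sum>l\<in>Ext t c. q l * f l) = 0"
proof -
  have "\<forall>l\<in>Ext t c. q l = 0" using assms sum_nonneg_eq_0_iff[OF finite_Ext, of t c q] by simp
  then show ?thesis by simp
qed

lemma sefce_upper:
  fixes t U \<epsilon> and q :: "nat list \<Rightarrow> real"
  defines "A \<equiv> \<lambda>c. (\<Sum>l\<in>Ext t c. q l)"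
    and "N \<equiv> \<lambda>c. (\<Sum>l\<in>Ext t c. q l * rew2 (subtree t l))"
    and "M \<equiv> \<lambda>c. (\<Sum>l\<in>Ext t c. q l * rew1 (subtree t l))"
  assumes L: "learned_epfs t U"
    and E: "\<forall>p. valid_pos t p \<longrightarrow> Linf (U p) (target t U p) \<le> ereal \<epsilon>"
    and S: "is_SEFCE t q"
  shows "\<forall>p. valid_pos t p \<longrightarrow> depth (subtree t p) \<le> n \<longrightarrow> 0 < A p \<longrightarrow>
     ereal (M p / A p - n * \<epsilon>) \<le> U p (N p / A p)"
proof -
  have q0: "\<forall>l. 0 \<le> q l" using S unfolding is_SEFCE_def leaf_dist_def by auto
  have eps: "0 \<le> \<epsilon>"
  proof -
    have "0 \<le> Linf (U []) (target t U [])" by (rule Linf_nonneg)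
    also have "\<dots> \<le> ereal \<epsilon>" using E by simp
    finally show ?thesis by simp
  qed
  have A0: "0 \<le> A c" for c unfolding A_def using q0 by (simp add: sum_nonneg)
  show ?thesis
  proof (induction n)
    case 0
    show ?case
    proof (intro allI impI)
      fix p assume v: "valid_pos t p" and d: "depth (subtree t p) \<le> 0" and a: "0 < A p"
      have lf: "is_leaf (subtree t p)" using depth0_leaf d by blast
      have e: "Ext t p = {p}" by (rule Ext_leaf[OF v lf])
      have "A p = q p" "N p = q p * rew2 (subtree t p)" "M p = q p * rew1 (subtree t p)"
        unfolding A_def N_def M_def e by simp_all
      then show "ereal (M p / A p - real 0 * \<epsilon>) \<le> U p (N p / A p)"
        using a leaf_U[OF L v lf] unfolding Uleaf_def by simp
    qed
  next
    case (Suc n)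
    show ?case
    proof (intro allI impI)
      fix p assume v: "valid_pos t p" and d: "depth (subtree t p) \<le> Suc n" and a: "0 < A p"
      show "ereal (M p / A p - real (Suc n) * \<epsilon>) \<le> U p (N p / A p)"
      proof (cases "is_leaf (subtree t p)")
        case lf: True
        have e: "Ext t p = {p}" by (rule Ext_leaf[OF v lf])
        have "A p = q p" "N p = q p * rew2 (subtree t p)" "M p = q p * rew1 (subtree t p)"
          unfolding A_def N_def M_def e by simp_all
        moreover have "0 \<le> real (Suc n) * \<epsilon>" using eps by simp
        ultimately show ?thesis
          using a leaf_U[OF L v lf] unfolding Uleaf_def by simp
      next
        case nl: False
        define k where "k = length (kids (subtree t p))"
        define K where "K = {..<k}"
        define Kp where "Kp = {i\<in>K. 0 < A (p @ [i])}"
        define \<alpha> where "\<alpha> i = A (p @ [i]) / A p" for i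
        define x where "x i = N (p @ [i]) / A (p @ [i])" for i
        define y where "y i = M (p @ [i]) / A (p @ [i]) - n * \<epsilon>" for i
        define G where "G = (\<lambda>\<mu>. SUP i\<in>{..<length (kids (subtree t p))}. child_fn t U p i \<mu>)"
        have fK: "finite K" "Kp \<subseteq> K" "finite Kp" unfolding K_def Kp_def by auto
        have z: "A (p @ [i]) = 0" if "i \<in> K - Kp" for i using that A0[of "p @ [i]"] unfolding Kp_def by auto
        have zN: "N (p @ [i]) = 0" and zM: "M (p @ [i]) = 0" if "i \<in> K - Kp" for i
          using z[OF that] sum_Ext_zero[OF q0] unfolding A_def N_def M_def by auto
        have sA: "A p = (\<Sum>i\<in>Kp. A (p @ [i]))"
        proof -
          have "A p = (\<Sum>i\<in>K. A (p @ [i]))" unfolding A_def K_def k_def by (rule sum_Ext_node[OF v nl])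
          also have "\<dots> = (\<Sum>i\<in>Kp. A (p @ [i]))" using z fK by (intro sum.mono_neutral_right) auto
          finally show ?thesis .
        qed
        have sN: "N p = (\<Sum>i\<in>Kp. N (p @ [i]))"
        proof -
          have "N p = (\<Sum>i\<in>K. N (p @ [i]))" unfolding N_def K_def k_def by (rule sum_Ext_node[OF v nl])
          also have "\<dots> = (\<Sum>i\<in>Kp. N (p @ [i]))" using zN fK by (intro sum.mono_neutral_right) auto
          finally show ?thesis .
        qed
        have sM: "M p = (\<Sum>i\<in>Kp. M (p @ [i]))"
        proof -
          have "M p = (\<Sum>i\<in>K. M (p @ [i]))" unfolding M_def K_def k_def by (rule sum_Ext_node[OF v nl])
          also have "\<dots> = (\<Sum>i\<in>Kp. M (p @ [i]))" using zM fK by (intro sum.mono_neutral_right) auto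
          finally show ?thesis .
        qed
        have a0: "\<forall>i\<in>Kp. 0 \<le> \<alpha> i" unfolding \<alpha>_def using A0 a by (simp add: divide_nonneg_pos)
        have a1: "sum \<alpha> Kp = 1" unfolding \<alpha>_def using sA a by (simp add: sum_divide_distrib[symmetric])
        have sx: "(\<Sum>i\<in>Kp. \<alpha> i * x i) = N p / A p"
        proof -
          have "(\<Sum>i\<in>Kp. \<alpha> i * x i) = (\<Sum>i\<in>Kp. N (p @ [i]) / A p)"
            by (rule sum.cong) (auto simp: \<alpha>_def x_def Kp_def)
          also have "\<dots> = N p / A p" using sN by (simp add: sum_divide_distrib[symmetric])
          finally show ?thesis .
        qed
        have sy: "(\<Sum>i\<in>Kp. \<alpha> i * y i) = M p / A p - n * \<epsilon>"
        proof -
          have "(\<Sum>i\<in>Kp. \<alpha> i * y i) = (\<Sum>i\<in>Kp. M (p @ [i]) / A p - \<alpha> i * (n * \<epsilon>))"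
            by (rule sum.cong) (auto simp: \<alpha>_def y_def Kp_def right_diff_distrib)
          also have "\<dots> = (\<Sum>i\<in>Kp. M (p @ [i]) / A p) - sum \<alpha> Kp * (n * \<epsilon>)"
            by (simp add: sum_subtractf sum_distrib_right)
          also have "\<dots> = M p / A p - n * \<epsilon>" using sM a1 by (simp add: sum_divide_distrib[symmetric])
          finally show ?thesis .
        qed
        have pts: "ereal (y i) \<le> G (x i)" if i: "i \<in> Kp" for i
        proof -
          have ik: "i < length (kids (subtree t p))" using i unfolding Kp_def K_def k_def by simp
          have vi: "valid_pos t (p @ [i])" using v ik by (simp add: valid_child)
          have pos: "0 < A (p @ [i])" using i unfolding Kp_def by simp
          have IH: "ereal (y i) \<le> U (p @ [i]) (x i)"
            using Suc.IH vi depth_child_le[OF d nl ik] pos unfolding x_def y_def by simp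
          have beta: "beta t p i \<le> ereal (x i)"
          proof (cases "owner (subtree t p) = Follower")
            case True
            have "reach_prob t q (p @ [i]) = A (p @ [i])" unfolding reach_prob_def A_def Ext_def by simp
            moreover have "R2_from t q (p @ [i]) = x i"
              unfolding R2_from_def x_def N_def A_def Ext_def reach_prob_def by simp
            ultimately have "tau t p i \<le> ereal (x i)"
            proof -
              have "\<forall>p i. valid_pos t p \<longrightarrow> \<not> is_leaf (subtree t p) \<longrightarrow> owner (subtree t p) = Follower \<longrightarrow>
                i < length (kids (subtree t p)) \<longrightarrow> reach_prob t q (p @ [i]) > 0 \<longrightarrow>
                tau t p i \<le> ereal (R2_from t q (p @ [i]))" using S unfolding is_SEFCE_def by blast
              then have "tau t p i \<le> ereal (R2_from t q (p @ [i]))" using v nl True ik pos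
                \<open>reach_prob t q (p @ [i]) = A (p @ [i])\<close> by simp
              then show ?thesis using \<open>R2_from t q (p @ [i]) = x i\<close> by simp
            qed
            then show ?thesis unfolding beta_def using True by simp
          next
            case False then show ?thesis unfolding beta_def by simp
          qed
          have "ereal (y i) \<le> child_fn t U p i (x i)" using IH beta by (simp add: child_fn_eq)
          also have "\<dots> \<le> G (x i)" unfolding G_def using ik by (intro SUP_upper) auto
          finally show ?thesis .
        qed
        have "ereal (M p / A p - n * \<epsilon>) \<le> target t U p (N p / A p)"
        proof -
          have "target t U p (N p / A p) = cenv G (N p / A p)" unfolding target_def G_def using nl by simp
          moreover have "ereal (M p / A p - n * \<epsilon>) \<le> cenv G (N p / A p)"
            unfolding cenv_def
          proof (rule Inf_greatest)
            fix z assume "z \<in> {h (N p / A p) |h. concave_ext h \<and> (\<forall>x. h x \<noteq> \<infinity>) \<and> (\<forall>x. G x \<le> h x)}"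
            then obtain h where h: "z = h (N p / A p)" "concave_ext h" "\<forall>x. G x \<le> h x" by blast
            have "\<forall>i\<in>Kp. ereal (y i) \<le> h (x i)" using pts h(3) order_trans by blast
            then have "ereal (\<Sum>i\<in>Kp. \<alpha> i * y i) \<le> h (\<Sum>i\<in>Kp. \<alpha> i * x i)"
              using jensen[OF h(2) fK(3)] a0 a1 by blast
            then show "ereal (M p / A p - n * \<epsilon>) \<le> z" using h(1) sx sy by simp
          qed
          ultimately show ?thesis by simp
        qed
        then have "ereal (M p / A p - n * \<epsilon> - \<epsilon>) \<le> U p (N p / A p)"
          using Linf_lower[OF E[rule_format, OF v]] by blast
        then show ?thesis by (simp add: algebra_simps)
      qed
    qed
  qed
qed

primrec ldist :: "gtree \<Rightarrow> (nat list \<Rightarrow> real \<Rightarrow> choice) \<Rightarrow> nat \<Rightarrow> nat list \<Rightarrow> real \<Rightarrow> nat list \<Rightarrow> real" where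
  "ldist t sel 0 p \<mu> = (\<lambda>l. if l = p then 1 else 0)"
| "ldist t sel (Suc n) p \<mu> = (if is_leaf (subtree t p) then (\<lambda>l. if l = p then 1 else 0)
     else (case sel p \<mu> of (i, j, w, \<mu>1, \<mu>2) \<Rightarrow>
       (\<lambda>l. w * ldist t sel n (p @ [i]) \<mu>1 l + (1 - w) * ldist t sel n (p @ [j]) \<mu>2 l)))"

lemma tau_notinf: "tau t p i \<noteq> \<infinity>"
proof -
  let ?ts = "kids (subtree t p)"
  let ?B = "(\<Sum>j<length ?ts. \<bar>vlow (?ts ! j)\<bar>)"
  have "tau t p i \<le> ereal ?B"
    unfolding tau_def Let_def
  proof (rule SUP_least)
    fix j assume "j \<in> {j. j < length ?ts \<and> j \<noteq> i}"
    then have "\<bar>vlow (?ts ! j)\<bar> \<le> ?B" by (intro member_le_sum) auto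
    then show "ereal (vlow (?ts ! j)) \<le> ereal ?B" by simp
  qed
  then show ?thesis by auto
qed

lemma sum_mix:
  fixes a b g :: "nat list \<Rightarrow> real"
  shows "(\<Sum>l\<in>X. (w * a l + (1 - w) * b l) * g l) = w * (\<Sum>l\<in>X. a l * g l) + (1 - w) * (\<Sum>l\<in>X. b l * g l)"
proof -
  have "(\<Sum>l\<in>X. (w * a l + (1 - w) * b l) * g l) = (\<Sum>l\<in>X. w * (a l * g l) + (1 - w) * (b l * g l))"
    by (rule sum.cong) (simp_all add: algebra_simps)
  also have "\<dots> = w * (\<Sum>l\<in>X. a l * g l) + (1 - w) * (\<Sum>l\<in>X. b l * g l)"
    by (simp add: sum.distrib sum_distrib_left)
  finally show ?thesis .
qed

lemma sum_point:
  fixes g :: "nat list \<Rightarrow> real"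
  assumes "p \<in> X" "finite X"
  shows "(\<Sum>l\<in>X. (if l = p then 1 else 0) * g l) = g p"
proof -
  have "(\<Sum>l\<in>X. (if l = p then 1 else 0) * g l) = (\<Sum>l\<in>X. (if l = p then g l else 0))"
    by (rule sum.cong) simp_all
  also have "\<dots> = g p" using assms by (simp add: sum.delta)
  finally show ?thesis .
qed

lemma leaf_in_LP: "valid_pos t p \<Longrightarrow> is_leaf (subtree t p) \<Longrightarrow> p \<in> leaf_positions t"
  unfolding leaf_positions_def by simp

context
  fixes t :: gtree and U :: "nat list \<Rightarrow> real \<Rightarrow> ereal" and \<epsilon> :: real and sel :: "nat list \<Rightarrow> real \<Rightarrow> choice"
  assumes L: "learned_epfs t U"
    and E: "\<forall>p. valid_pos t p \<longrightarrow> Linf (U p) (target t U p) \<le> ereal \<epsilon>"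
    and I: "induced_selection t U sel"
begin

lemma sel_info:
  assumes v: "valid_pos t p" and nl: "\<not> is_leaf (subtree t p)" and s: "sel p \<mu> = (i, j, w, \<mu>1, \<mu>2)"
  shows "i < length (kids (subtree t p))" "j < length (kids (subtree t p))" "0 \<le> w" "w \<le> 1"
    "w * \<mu>1 + (1 - w) * \<mu>2 = \<mu>"
  using sel_feasible[OF L E I v nl, of \<mu>] s unfolding feasible_choice_def by auto

lemma ldist_supp:
  "\<forall>p \<mu> l. valid_pos t p \<longrightarrow> depth (subtree t p) \<le> n \<longrightarrow>
     0 \<le> ldist t sel n p \<mu> l \<and> (ldist t sel n p \<mu> l \<noteq> 0 \<longrightarrow> l \<in> Ext t p)"
proof (induction n)
  case 0
  show ?case
  proof (intro allI impI)
    fix p \<mu> l assume v: "valid_pos t p" and d: "depth (subtree t p) \<le> 0"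
    have "is_leaf (subtree t p)" using depth0_leaf d by blast
    then show "0 \<le> ldist t sel 0 p \<mu> l \<and> (ldist t sel 0 p \<mu> l \<noteq> 0 \<longrightarrow> l \<in> Ext t p)"
      using Ext_leaf[OF v] by simp
  qed
next
  case (Suc n)
  show ?case
  proof (intro allI impI)
    fix p \<mu> l assume v: "valid_pos t p" and d: "depth (subtree t p) \<le> Suc n"
    show "0 \<le> ldist t sel (Suc n) p \<mu> l \<and> (ldist t sel (Suc n) p \<mu> l \<noteq> 0 \<longrightarrow> l \<in> Ext t p)"
    proof (cases "is_leaf (subtree t p)")
      case True then show ?thesis using Ext_leaf[OF v] by simp
    next
      case nl: False
      obtain i j w \<mu>1 \<mu>2 where s: "sel p \<mu> = (i, j, w, \<mu>1, \<mu>2)" by (cases "sel p \<mu>") auto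
      note o = sel_info[OF v nl s]
      have vi: "valid_pos t (p @ [i])" and vj: "valid_pos t (p @ [j])" using v o by (auto simp: valid_child)
      note hi = Suc.IH[rule_format, OF vi depth_child_le[OF d nl o(1)], of \<mu>1 l]
      note hj = Suc.IH[rule_format, OF vj depth_child_le[OF d nl o(2)], of \<mu>2 l]
      have eq: "ldist t sel (Suc n) p \<mu> l = w * ldist t sel n (p @ [i]) \<mu>1 l + (1 - w) * ldist t sel n (p @ [j]) \<mu>2 l"
        using nl s by simp
      have "Ext t (p @ [i]) \<subseteq> Ext t p" "Ext t (p @ [j]) \<subseteq> Ext t p" unfolding Ext_def by auto
      then show ?thesis unfolding eq using hi hj o(3,4) by auto
    qed
  qed
qed

lemma ldist_sums:
  "\<forall>p \<mu>. valid_pos t p \<longrightarrow> depth (subtree t p) \<le> n \<longrightarrow>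
     (\<Sum>l\<in>leaf_positions t. ldist t sel n p \<mu> l) = 1 \<and>
     (\<Sum>l\<in>leaf_positions t. ldist t sel n p \<mu> l * rew1 (subtree t l)) = play_value t sel n p \<mu> \<and>
     (\<forall>a. ereal a \<le> U p \<mu> \<longrightarrow> (\<Sum>l\<in>leaf_positions t. ldist t sel n p \<mu> l * rew2 (subtree t l)) = \<mu>)"
proof (induction n)
  case 0
  show ?case
  proof (intro allI impI)
    fix p \<mu> assume v: "valid_pos t p" and d: "depth (subtree t p) \<le> 0"
    have lf: "is_leaf (subtree t p)" using depth0_leaf d by blast
    note P = leaf_in_LP[OF v lf]
    have s1: "(\<Sum>l\<in>leaf_positions t. ldist t sel 0 p \<mu> l) = 1"
      using sum_point[OF P finite_LP, of "\<lambda>_. 1"] by simp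
    have s2: "(\<Sum>l\<in>leaf_positions t. ldist t sel 0 p \<mu> l * g l) = g p" for g
      using sum_point[OF P finite_LP, of g] by simp
    show "(\<Sum>l\<in>leaf_positions t. ldist t sel 0 p \<mu> l) = 1 \<and>
     (\<Sum>l\<in>leaf_positions t. ldist t sel 0 p \<mu> l * rew1 (subtree t l)) = play_value t sel 0 p \<mu> \<and>
     (\<forall>a. ereal a \<le> U p \<mu> \<longrightarrow> (\<Sum>l\<in>leaf_positions t. ldist t sel 0 p \<mu> l * rew2 (subtree t l)) = \<mu>)"
      using s1 s2 leaf_lower[OF L v lf] by simp
  qed
next
  case (Suc n)
  show ?case
  proof (intro allI impI)
    fix p \<mu> assume v: "valid_pos t p" and d: "depth (subtree t p) \<le> Suc n"
    show "(\<Sum>l\<in>leaf_positions t. ldist t sel (Suc n) p \<mu> l) = 1 \<and>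
     (\<Sum>l\<in>leaf_positions t. ldist t sel (Suc n) p \<mu> l * rew1 (subtree t l)) = play_value t sel (Suc n) p \<mu> \<and>
     (\<forall>a. ereal a \<le> U p \<mu> \<longrightarrow> (\<Sum>l\<in>leaf_positions t. ldist t sel (Suc n) p \<mu> l * rew2 (subtree t l)) = \<mu>)"
    proof (cases "is_leaf (subtree t p)")
      case lf: True
      note P = leaf_in_LP[OF v lf]
      have s1: "(\<Sum>l\<in>leaf_positions t. ldist t sel (Suc n) p \<mu> l) = 1"
        using sum_point[OF P finite_LP, of "\<lambda>_. 1"] lf by simp
      have s2: "(\<Sum>l\<in>leaf_positions t. ldist t sel (Suc n) p \<mu> l * g l) = g p" for g
        using sum_point[OF P finite_LP, of g] lf by simp
      show ?thesis using s1 s2 leaf_lower[OF L v lf] lf by simp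
    next
      case nl: False
      obtain i j w \<mu>1 \<mu>2 where s: "sel p \<mu> = (i, j, w, \<mu>1, \<mu>2)" by (cases "sel p \<mu>") auto
      note o = sel_info[OF v nl s]
      have vi: "valid_pos t (p @ [i])" and vj: "valid_pos t (p @ [j])" using v o by (auto simp: valid_child)
      note hi = Suc.IH[rule_format, OF vi depth_child_le[OF d nl o(1)], of \<mu>1]
      note hj = Suc.IH[rule_format, OF vj depth_child_le[OF d nl o(2)], of \<mu>2]
      define di where "di = ldist t sel n (p @ [i]) \<mu>1"
      define dj where "dj = ldist t sel n (p @ [j]) \<mu>2"
      have eq: "ldist t sel (Suc n) p \<mu> = (\<lambda>l. w * di l + (1 - w) * dj l)"
        using nl s unfolding di_def dj_def by simp
      have m: "(\<Sum>l\<in>leaf_positions t. ldist t sel (Suc n) p \<mu> l * g l) =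
          w * (\<Sum>l\<in>leaf_positions t. di l * g l) + (1 - w) * (\<Sum>l\<in>leaf_positions t. dj l * g l)" for g
        unfolding eq by (rule sum_mix)
      have s1: "(\<Sum>l\<in>leaf_positions t. ldist t sel (Suc n) p \<mu> l) = 1"
        using m[of "\<lambda>_. 1"] hi hj unfolding di_def dj_def by simp
      have s2: "(\<Sum>l\<in>leaf_positions t. ldist t sel (Suc n) p \<mu> l * rew1 (subtree t l)) = play_value t sel (Suc n) p \<mu>"
        using m[of "\<lambda>l. rew1 (subtree t l)"] hi hj nl s unfolding di_def dj_def by simp
      have s3: "(\<Sum>l\<in>leaf_positions t. ldist t sel (Suc n) p \<mu> l * rew2 (subtree t l)) = \<mu>"
        if a: "ereal a \<le> U p \<mu>" for a
      proof -
        have f: "feasible_choice t p \<mu> (i, j, w, \<mu>1, \<mu>2)" using sel_feasible[OF L E I v nl, of \<mu>] s by simp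
        obtain c1 c2 where c: "0 < w \<longrightarrow> ereal c1 \<le> child_fn t U p i \<mu>1" "w < 1 \<longrightarrow> ereal c2 \<le> child_fn t U p j \<mu>2"
          using obj_lower_split[OF L v f, of "a - \<epsilon>"] obj_lower[OF L E I v nl a] s by auto
        have X: "w * (\<Sum>l\<in>leaf_positions t. di l * rew2 (subtree t l)) = w * \<mu>1"
        proof (cases "w = 0")
          case False
          then have "ereal c1 \<le> U (p @ [i]) \<mu>1" using c(1) o(3) child_fn_lower by force
          then have "(\<Sum>l\<in>leaf_positions t. di l * rew2 (subtree t l)) = \<mu>1"
            using conjunct2[OF conjunct2[OF hi]] unfolding di_def by blast
          then show ?thesis by simp
        qed simp
        have Y: "(1 - w) * (\<Sum>l\<in>leaf_positions t. dj l * rew2 (subtree t l)) = (1 - w) * \<mu>2"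
        proof (cases "w = 1")
          case False
          then have "ereal c2 \<le> U (p @ [j]) \<mu>2" using c(2) o(4) child_fn_lower by force
          then have "(\<Sum>l\<in>leaf_positions t. dj l * rew2 (subtree t l)) = \<mu>2"
            using conjunct2[OF conjunct2[OF hj]] unfolding dj_def by blast
          then show ?thesis by simp
        qed simp
        show ?thesis unfolding m[of "\<lambda>l. rew2 (subtree t l)"] using X Y o(5) by linarith
      qed
      show ?thesis using s1 s2 s3 by blast
    qed
  qed
qed

end

context
  fixes t :: gtree and U :: "nat list \<Rightarrow> real \<Rightarrow> ereal" and \<epsilon> :: real and sel :: "nat list \<Rightarrow> real \<Rightarrow> choice"
  assumes L: "learned_epfs t U"
    and E: "\<forall>p. valid_pos t p \<longrightarrow> Linf (U p) (target t U p) \<le> ereal \<epsilon>"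
    and I: "induced_selection t U sel"
begin

lemma ldist_incentive:
  fixes c p0 :: "nat list" and k :: nat and \<tau> :: real
  assumes cv: "valid_pos t c" and c: "c = p0 @ [k]" and fol: "owner (subtree t p0) = Follower"
    and tau: "tau t p0 k = ereal \<tau>"
  shows "\<forall>p \<mu> a. valid_pos t p \<longrightarrow> depth (subtree t p) \<le> n \<longrightarrow> ereal a \<le> U p \<mu> \<longrightarrow>
     (\<exists>r. c = p @ r \<and> r \<noteq> []) \<longrightarrow>
     0 \<le> (\<Sum>l\<in>Ext t c. ldist t sel n p \<mu> l * (rew2 (subtree t l) - \<tau>))"
proof (induction n)
  case 0
  show ?case
  proof (intro allI impI)
    fix p \<mu> a assume v: "valid_pos t p" and d: "depth (subtree t p) \<le> 0" and "ereal a \<le> U p \<mu>"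
      and r: "\<exists>r. c = p @ r \<and> r \<noteq> []"
    have lf: "is_leaf (subtree t p)" using depth0_leaf d by blast
    obtain r where "c = p @ r" "r \<noteq> []" using r by blast
    then have "valid_pos (subtree t p) r" using cv by (simp add: valid_append)
    then have False using valid_leaf_Nil[OF lf] \<open>r \<noteq> []\<close> by blast
    then show "0 \<le> (\<Sum>l\<in>Ext t c. ldist t sel 0 p \<mu> l * (rew2 (subtree t l) - \<tau>))" by blast
  qed
next
  case (Suc n)
  show ?case
  proof (intro allI impI)
    fix p \<mu> a assume v: "valid_pos t p" and d: "depth (subtree t p) \<le> Suc n" and a: "ereal a \<le> U p \<mu>"
      and r: "\<exists>r. c = p @ r \<and> r \<noteq> []"
    obtain r where cr: "c = p @ r" "r \<noteq> []" using r by blast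
    show "0 \<le> (\<Sum>l\<in>Ext t c. ldist t sel (Suc n) p \<mu> l * (rew2 (subtree t l) - \<tau>))"
    proof (cases "is_leaf (subtree t p)")
      case lf: True
      have "valid_pos (subtree t p) r" using cv cr by (simp add: valid_append)
      then have False using valid_leaf_Nil[OF lf] cr by blast
      then show ?thesis by blast
    next
      case nl: False
      have child: "0 \<le> (\<Sum>l\<in>Ext t c. ldist t sel n (p @ [i]) \<mu>' l * (rew2 (subtree t l) - \<tau>))"
        if ik: "i < length (kids (subtree t p))" and u: "ereal b \<le> U (p @ [i]) \<mu>'"
          and be: "beta t p i \<le> ereal \<mu>'" for i \<mu>' b
      proof -
        have vi: "valid_pos t (p @ [i])" using v ik by (simp add: valid_child)
        have di: "depth (subtree t (p @ [i])) \<le> n" using depth_child_le[OF d nl ik] .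
        note S = ldist_sums[OF L E I, rule_format, OF vi di, of \<mu>']
        note supp = ldist_supp[OF L E I, rule_format, OF vi di, of \<mu>']
        define d where "d = ldist t sel n (p @ [i]) \<mu>'"
        consider (eq) "c = p @ [i]" | (below) "\<exists>r'. c = (p @ [i]) @ r' \<and> r' \<noteq> []"
          | (off) "\<not> (c = p @ [i]) \<and> \<not> (\<exists>r'. c = (p @ [i]) @ r' \<and> r' \<noteq> [])" by blast
        then show ?thesis
        proof cases
          case eq
          then have "p = p0" "i = k" using c by auto
          then have "ereal \<tau> \<le> ereal \<mu>'" using be tau fol unfolding beta_def by simp
          then have tl: "\<tau> \<le> \<mu>'" by simp
          have sub: "Ext t c \<subseteq> leaf_positions t" unfolding Ext_def by auto
          have "(\<Sum>l\<in>Ext t c. d l * (rew2 (subtree t l) - \<tau>)) = (\<Sum>l\<in>leaf_positions t. d l * (rew2 (subtree t l) - \<tau>))"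
            using sub finite_LP supp eq unfolding d_def by (intro sum.mono_neutral_left) auto
          also have "\<dots> = (\<Sum>l\<in>leaf_positions t. d l * rew2 (subtree t l)) - \<tau> * (\<Sum>l\<in>leaf_positions t. d l)"
            by (simp add: right_diff_distrib sum_subtractf sum_distrib_left algebra_simps)
          also have "\<dots> = \<mu>' - \<tau>" using S u unfolding d_def by auto
          finally show ?thesis using tl unfolding d_def by simp
        next
          case below
          then show ?thesis using Suc.IH vi di u by blast
        next
          case off
          have "ldist t sel n (p @ [i]) \<mu>' l * (rew2 (subtree t l) - \<tau>) = 0" if l: "l \<in> Ext t c" for l
          proof (rule ccontr)
            assume "ldist t sel n (p @ [i]) \<mu>' l * (rew2 (subtree t l) - \<tau>) \<noteq> 0"
            then have "l \<in> Ext t (p @ [i])" using supp by auto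
            then obtain r2 where l2: "l = p @ [i] @ r2" unfolding Ext_def by auto
            obtain r1 where l1: "l = c @ r1" using l unfolding Ext_def by auto
            have "r @ r1 = [i] @ r2" using l1 l2 cr by simp
            then obtain r'' where "r = i # r''" using cr(2) by (cases r) auto
            then have "c = (p @ [i]) @ r''" using cr by simp
            then show False using off by (cases "r'' = []") auto
          qed
          then have "(\<Sum>l\<in>Ext t c. ldist t sel n (p @ [i]) \<mu>' l * (rew2 (subtree t l) - \<tau>)) = 0"
            by (intro sum.neutral) blast
          then show ?thesis by simp
        qed
      qed
      obtain i j w \<mu>1 \<mu>2 where s: "sel p \<mu> = (i, j, w, \<mu>1, \<mu>2)" by (cases "sel p \<mu>") auto
      note o = sel_info[OF L E I v nl s]
      have f: "feasible_choice t p \<mu> (i, j, w, \<mu>1, \<mu>2)" using sel_feasible[OF L E I v nl, of \<mu>] s by simp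
      obtain c1 c2 where cc: "0 < w \<longrightarrow> ereal c1 \<le> child_fn t U p i \<mu>1" "w < 1 \<longrightarrow> ereal c2 \<le> child_fn t U p j \<mu>2"
        using obj_lower_split[OF L v f, of "a - \<epsilon>"] obj_lower[OF L E I v nl a] s by auto
      define di where "di = ldist t sel n (p @ [i]) \<mu>1"
      define dj where "dj = ldist t sel n (p @ [j]) \<mu>2"
      have eq: "ldist t sel (Suc n) p \<mu> = (\<lambda>l. w * di l + (1 - w) * dj l)"
        using nl s unfolding di_def dj_def by simp
      have X: "0 \<le> w * (\<Sum>l\<in>Ext t c. di l * (rew2 (subtree t l) - \<tau>))"
      proof (cases "w = 0")
        case False
        then have "ereal c1 \<le> U (p @ [i]) \<mu>1 \<and> beta t p i \<le> ereal \<mu>1" using cc(1) o(3) child_fn_lower by force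
        then show ?thesis using child[OF o(1)] o(3) unfolding di_def by auto
      qed simp
      have Y: "0 \<le> (1 - w) * (\<Sum>l\<in>Ext t c. dj l * (rew2 (subtree t l) - \<tau>))"
      proof (cases "w = 1")
        case False
        then have "ereal c2 \<le> U (p @ [j]) \<mu>2 \<and> beta t p j \<le> ereal \<mu>2" using cc(2) o(4) child_fn_lower by force
        then show ?thesis using child[OF o(2)] o(4) unfolding dj_def by auto
      qed simp
      show ?thesis unfolding eq sum_mix using X Y by linarith
    qed
  qed
qed

end

lemma Ext_root: "Ext t [] = leaf_positions t"
  unfolding Ext_def by auto

theorem theorem3:
  "\<exists>C::real. \<forall>(t::gtree) (U::nat list \<Rightarrow> real \<Rightarrow> ereal) (\<epsilon>::real)
      (sel::nat list \<Rightarrow> real \<Rightarrow> choice) (\<mu>root::real) (q::nat list \<Rightarrow> real).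
     wf_tree t \<longrightarrow>
     learned_epfs t U \<longrightarrow>
     (\<forall>p. valid_pos t p \<longrightarrow> Linf (U p) (target t U p) \<le> ereal \<epsilon>) \<longrightarrow>
     induced_selection t U sel \<longrightarrow>
     (\<forall>\<mu>. U [] \<mu> \<le> U [] \<mu>root) \<longrightarrow>
     optimal_SEFCE t q \<longrightarrow>
     \<bar>induced_payoff t sel \<mu>root - R1 t q\<bar> \<le> C * real (depth t) * \<epsilon>"
proof (intro exI[of _ 2] allI impI)
  fix t U \<epsilon> sel \<mu>root and q :: "nat list \<Rightarrow> real"
  assume L: "learned_epfs t U"
    and E: "\<forall>p. valid_pos t p \<longrightarrow> Linf (U p) (target t U p) \<le> ereal \<epsilon>"
    and I: "induced_selection t U sel"
    and mx: "\<forall>\<mu>. U [] \<mu> \<le> U [] \<mu>root"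
    and opt: "optimal_SEFCE t q"
  define D where "D = depth t"
  have v0: "valid_pos t []" by simp
  have d0: "depth (subtree t []) \<le> D" unfolding D_def by simp
  obtain \<mu>0 c0 where "U [] \<mu>0 = ereal c0" using U_somewhere[OF L v0] by blast
  then have "ereal c0 \<le> U [] \<mu>root" using mx by metis
  moreover have "U [] \<mu>root \<noteq> \<infinity>" using U_notinf[OF L v0] .
  ultimately obtain a where a: "U [] \<mu>root = ereal a" by (cases "U [] \<mu>root") auto
  have P: "induced_payoff t sel \<mu>root = play_value t sel D [] \<mu>root"
    unfolding induced_payoff_def D_def by simp
  have low: "a - D * \<epsilon> \<le> play_value t sel D [] \<mu>root"
    using play_lower[OF L E I, rule_format, OF v0 d0] a by simp
  have S: "is_SEFCE t q" using opt unfolding optimal_SEFCE_def by simp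
  have sq: "(\<Sum>l\<in>leaf_positions t. q l) = 1" using S unfolding is_SEFCE_def leaf_dist_def by simp
  have up0: "ereal ((\<Sum>l\<in>Ext t []. q l * rew1 (subtree t l)) / (\<Sum>l\<in>Ext t []. q l) - D * \<epsilon>)
      \<le> U [] ((\<Sum>l\<in>Ext t []. q l * rew2 (subtree t l)) / (\<Sum>l\<in>Ext t []. q l))"
    using sefce_upper[OF L E S, rule_format, OF v0 d0] sq unfolding Ext_root by simp
  then have "ereal (R1 t q - D * \<epsilon>) \<le> ereal a"
    using sq mx a unfolding Ext_root R1_def by (metis div_by_1 order_trans)
  then have up: "R1 t q - D * \<epsilon> \<le> a" by simp
  \<comment> \<open>the induced strategy is an SEFCE\<close>
  define q' where "q' = ldist t sel D [] \<mu>root"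
  note supp = ldist_supp[OF L E I, rule_format, OF v0 d0, of \<mu>root]
  note sums = ldist_sums[OF L E I, rule_format, OF v0 d0, of \<mu>root]
  have ld: "leaf_dist t q'"
    unfolding leaf_dist_def
  proof (intro conjI allI impI)
    fix l show "0 \<le> q' l" using supp unfolding q'_def by blast
  next
    fix l assume "l \<notin> leaf_positions t"
    then show "q' l = 0" using supp unfolding q'_def Ext_root by blast
  next
    show "(\<Sum>l\<in>leaf_positions t. q' l) = 1" using sums unfolding q'_def by blast
  qed
  have inc: "tau t p i \<le> ereal (R2_from t q' (p @ [i]))"
    if v: "valid_pos t p" and nl: "\<not> is_leaf (subtree t p)" and fol: "owner (subtree t p) = Follower"
      and ik: "i < length (kids (subtree t p))" and rp: "reach_prob t q' (p @ [i]) > 0" for p i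
  proof (cases "tau t p i = - \<infinity>")
    case True then show ?thesis by simp
  next
    case False
    then obtain \<tau> where tau: "tau t p i = ereal \<tau>" using tau_notinf[of t p i] by (cases "tau t p i") auto
    have cv: "valid_pos t (p @ [i])" using v ik by (simp add: valid_child)
    have "0 \<le> (\<Sum>l\<in>Ext t (p @ [i]). q' l * (rew2 (subtree t l) - \<tau>))"
      using ldist_incentive[OF L E I cv refl fol tau, rule_format, OF v0 d0, of a \<mu>root] a
      unfolding q'_def by simp
    also have "\<dots> = (\<Sum>l\<in>Ext t (p @ [i]). q' l * rew2 (subtree t l)) - \<tau> * reach_prob t q' (p @ [i])"
      unfolding reach_prob_def Ext_def
      by (simp add: right_diff_distrib sum_subtractf sum_distrib_left algebra_simps)
    finally have "\<tau> * reach_prob t q' (p @ [i]) \<le> (\<Sum>l\<in>Ext t (p @ [i]). q' l * rew2 (subtree t l))" by simp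
    then have "\<tau> \<le> R2_from t q' (p @ [i])"
      using rp unfolding R2_from_def Ext_def by (simp add: pos_le_divide_eq mult.commute)
    then show ?thesis using tau by simp
  qed
  have "is_SEFCE t q'" unfolding is_SEFCE_def using ld inc by blast
  then have "R1 t q' \<le> R1 t q" using opt unfolding optimal_SEFCE_def by blast
  moreover have "R1 t q' = play_value t sel D [] \<mu>root" using sums unfolding R1_def q'_def by blast
  ultimately have hi: "play_value t sel D [] \<mu>root \<le> R1 t q" by simp
  have "\<bar>play_value t sel D [] \<mu>root - R1 t q\<bar> \<le> 2 * D * \<epsilon>" using low up hi by simp
  then show "\<bar>induced_payoff t sel \<mu>root - R1 t q\<bar> \<le> 2 * real (depth t) * \<epsilon>"
    unfolding P D_def by simp
qed

end
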